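(* Let $n\ge1$, $K=U(n)$, $\underline{\lambda}=(\lambda_1\ge\dots\ge\lambda_{n+1})$, $\underline{\mu}=(\mu_1\ge\dots\ge\mu_n)$ with $\lambda_1\ge\mu_1\ge\lambda_2\ge\dots\ge\mu_n\ge\lambda_{n+1}$, $m=m(\underline{\mu})$, and let $\tilde p\in\mathcal{O}_\Lambda$, $V=\bigoplus V_i$-projections $V_i,U_i$ and $L_i$ be as in the context. Then for every $i=1,\dots,m$ there is an isomorphism of $L_i$-representations $$V_i/U_i\cong\begin{cases}\mathbb{C}^{n_i(\underline{\mu})} & \text{if the component labelled }\underline{\mu}_i\text{ is a parallelogram-shape},\\ \{0\}&\text{otherwise},\end{cases}$$ where $\mathbb{C}^{n_i(\underline{\mu})}$ is the standard representation of $U(n_i(\underline{\mu}))=L_i$.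
   Context: Notation: for a finite real sequence $\underline{\tau}$, $[\underline{\tau}]$ is its set of distinct values, $\underline{\tau}_i$ the $i$-th element of $[\underline{\tau}]$ in decreasing order, $m(\underline{\tau})=|[\underline{\tau}]|$, $n_v(\underline{\tau})$ the multiplicity of $v$, $n_i(\underline{\tau})=n_{\underline{\tau}_i}(\underline{\tau})$. Shapes: for each value $v$ in $\underline{\lambda}$ or $\underline{\mu}$, the component labelled $v$ is an M-shape if $n_v(\underline{\mu})=n_v(\underline{\lambda})+1$, a W-shape if $n_v(\underline{\lambda})=n_v(\underline{\mu})+1$, a parallelogram-shape if $n_v(\underline{\lambda})=n_v(\underline{\mu})$. For $\mu\in[\underline{\mu}]$ with M-shape component, $r_\mu>0$ with $r_\mu^2=-\prod_{\lambda\in[\underline{\lambda}],\,\text{W}}(\mu-\lambda)\prod_{\tau\in[\underline{\mu}],\,\text{M},\,\tau\neq\mu}\frac{1}{\mu-\tau}$; otherwise $r_\mu=0$. Setting: $\mathcal{O}_\Lambda$ is the set of $(n+1)\times(n+1)$ Hermitian matrices with eigenvalues $\lambda_1,\dots,\lambda_{n+1}$, with symplectic form $(\omega_\Lambda)_p([X,p],[Y,p])=\frac{1}{\sqrt{-1}}\mathrm{Tr}(p[X,Y])$, $X,Y\in\mathfrak{u}(n+1)$; $K$ acts by conjugation by $\mathrm{diag}(1,k)$. $\mathrm{M}=\mathrm{diag}(\mu_1,\dots,\mu_n)$, $c=\sum\lambda_i-\sum\mu_i$. Split $\mathbb{C}^n=\bigoplus_{i=1}^m\mathbb{C}^{n_i(\underline{\mu})}$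 according to the blocks of equal consecutive $\mu_j$; $\mathbf{v}_i$ denotes the $i$-th block of $\mathbf{v}\in\mathbb{C}^n$. $\tilde p=\begin{pmatrix}c&\mathbf{z}^\dagger\\ \mathbf{z}&\mathrm{M}\end{pmatrix}$ where $\mathbf{z}_i=(r_{\underline{\mu}_i},0,\dots,0)^T$ for each $i$; then $\tilde p\in\mathcal{O}_\Lambda$. Let $T\colon T_{\tilde p}(K\cdot\tilde p)^\omega\to\mathbb{C}^n$ send a tangent vector (which is a Hermitian matrix of the form $\begin{pmatrix}0&\mathbf{v}^\dagger\\ \mathbf{v}&0\end{pmatrix}$) to its lower-left block $\mathbf{v}$; here $T_{\tilde p}(K\cdot\tilde p)^\omega$ is the $\omega_\Lambda$-orthogonal complement of the tangent space of the $K$-orbit. Let $V=T(T_{\tilde p}(K\cdot\tilde p)^\omega)$, $U=T(T_{\tilde p}(K\cdot\tilde p)\cap T_{\tilde p}(K\cdot\tilde p)^\omega)$, and let $V_i,U_i\subset\mathbb{C}^{n_i(\underline{\mu})}$ be the projections of $V,U$ onto the $i$-th block, so $U_i\subseteq V_i$. The isotropy group $K_{\tilde p}$ is the block-diagonal group $L_1\times\dots\times L_m$ with $L_i=\{\mathrm{diag}(1,k):k\in U(n_i(\underline{\mu})-1)\}\le U(n_i(\underline{\mu}))$ if the component labelled $\underline{\mu}_i$ is an M-shape and $L_i=U(n_i(\underline{\mu}))$ otherwise; $L_i$ acts on $\mathbb{C}^{n_i(\underline{\mu})}$ via $L_i\subseteq U(n_i(\underline{\mu}))$, preserving $U_i\subseteq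 V_i$, hence acts on $V_i/U_i$. *)

theory Defs
  imports "HOL-Analysis.Analysis" "Jordan_Normal_Form.Matrix"
begin

text \<open>A finite real sequence of length len is a function nat => real, used on indices below len.\<close>

definition vals :: "(nat \<Rightarrow> real) \<Rightarrow> nat \<Rightarrow> real set" where
  "vals tau len = tau ` {..<len}"

text \<open>Distinct values in decreasing order; the paper's underline-tau_i is (dvals tau len) ! (i-1).\<close>
definition dvals :: "(nat \<Rightarrow> real) \<Rightarrow> nat \<Rightarrow> real list" where
  "dvals tau len = rev (sorted_list_of_set (vals tau len))"

definition mcount :: "(nat \<Rightarrow> real) \<Rightarrow> nat \<Rightarrow> nat" where
  "mcount tau len = length (dvals tau len)"

definition mult :: "(nat \<Rightarrow> real) \<Rightarrow> nat \<Rightarrow> real \<Rightarrow> nat" where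
  "mult tau len v = card {j. j < len \<and> tau j = v}"

definition is_M :: "nat \<Rightarrow> (nat \<Rightarrow> real) \<Rightarrow> (nat \<Rightarrow> real) \<Rightarrow> real \<Rightarrow> bool" where
  "is_M n lam mu v \<longleftrightarrow> mult mu n v = mult lam (n+1) v + 1"

definition is_W :: "nat \<Rightarrow> (nat \<Rightarrow> real) \<Rightarrow> (nat \<Rightarrow> real) \<Rightarrow> real \<Rightarrow> bool" where
  "is_W n lam mu v \<longleftrightarrow> mult lam (n+1) v = mult mu n v + 1"

definition is_P :: "nat \<Rightarrow> (nat \<Rightarrow> real) \<Rightarrow> (nat \<Rightarrow> real) \<Rightarrow> real \<Rightarrow> bool" where
  "is_P n lam mu v \<longleftrightarrow> mult lam (n+1) v = mult mu n v"

definition r_coef :: "nat \<Rightarrow> (nat \<Rightarrow> real) \<Rightarrow> (nat \<Rightarrow> real) \<Rightarrow> real \<Rightarrow> real" where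
  "r_coef n lam mu v =
     (if v \<in> vals mu n \<and> is_M n lam mu v then
        sqrt (- (\<Prod>l\<in>{l\<in>vals lam (n+1). is_W n lam mu l}. (v - l))
               * (\<Prod>t\<in>{t\<in>vals mu n. is_M n lam mu t \<and> t \<noteq> v}. 1 / (v - t)))
      else 0)"

text \<open>Block i (0-based) of C^n: indices j with mu j equal to the i-th largest distinct value;
  size n_i = block_size, starting index block_start.\<close>
definition block_size :: "nat \<Rightarrow> (nat \<Rightarrow> real) \<Rightarrow> nat \<Rightarrow> nat" where
  "block_size n mu i = mult mu n (dvals mu n ! i)"

definition block_start :: "nat \<Rightarrow> (nat \<Rightarrow> real) \<Rightarrow> nat \<Rightarrow> nat" where
  "block_start n mu i = (\<Sum>k<i. block_size n mu k)"

definition block_proj :: "nat \<Rightarrow> (nat \<Rightarrow> real) \<Rightarrow> nat \<Rightarrow> complex vec \<Rightarrow> complex vec" where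
  "block_proj n mu i v = vec (block_size n mu i) (\<lambda>k. v $ (block_start n mu i + k))"

definition adj :: "complex mat \<Rightarrow> complex mat" where
  "adj A = mat (dim_col A) (dim_row A) (\<lambda>(i,j). cnj (A $$ (j,i)))"

definition mtrace :: "complex mat \<Rightarrow> complex" where
  "mtrace A = (\<Sum>i<dim_row A. A $$ (i,i))"

definition unitary_grp :: "nat \<Rightarrow> complex mat set" where
  "unitary_grp d = {g \<in> carrier_mat d d. g * adj g = 1\<^sub>m d}"

definition u_alg :: "nat \<Rightarrow> complex mat set" where
  "u_alg d = {X \<in> carrier_mat d d. adj X = - X}"

text \<open>Lie algebra of K = U(n) embedded as diag(1,k) in U(n+1): matrices diag(0,Y), Y in u(n).\<close>
definition k_alg :: "nat \<Rightarrow> complex mat set" where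
  "k_alg n = {X \<in> u_alg (n+1). \<forall>j\<le>n. X $$ (0,j) = 0 \<and> X $$ (j,0) = 0}"

definition comm :: "complex mat \<Rightarrow> complex mat \<Rightarrow> complex mat" where
  "comm X Y = X * Y - Y * X"

text \<open>omega_p([X,p],[Y,p]) = (1/i) Tr(p[X,Y]), expressed on representatives X, Y.\<close>
definition omega :: "complex mat \<Rightarrow> complex mat \<Rightarrow> complex mat \<Rightarrow> complex" where
  "omega p X Y = (1 / \<i>) * mtrace (p * comm X Y)"

definition tangent_orbit :: "nat \<Rightarrow> complex mat \<Rightarrow> complex mat set" where
  "tangent_orbit n p = {comm X p | X. X \<in> u_alg (n+1)}"

definition tangent_K :: "nat \<Rightarrow> complex mat \<Rightarrow> complex mat set" where
  "tangent_K n p = {comm X p | X. X \<in> k_alg n}"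

text \<open>omega-orthogonal complement of the tangent space of the K-orbit inside T_p O
  (omega does not depend on the choice of representatives).\<close>
definition tangent_K_perp :: "nat \<Rightarrow> complex mat \<Rightarrow> complex mat set" where
  "tangent_K_perp n p = {comm X p | X. X \<in> u_alg (n+1) \<and> (\<forall>Y\<in>k_alg n. omega p X Y = 0)}"

definition Tmap :: "nat \<Rightarrow> complex mat \<Rightarrow> complex vec" where
  "Tmap n A = vec n (\<lambda>j. A $$ (j+1, 0))"

definition c_const :: "nat \<Rightarrow> (nat \<Rightarrow> real) \<Rightarrow> (nat \<Rightarrow> real) \<Rightarrow> real" where
  "c_const n lam mu = (\<Sum>j\<le>n. lam j) - (\<Sum>j<n. mu j)"

definition z_vec :: "nat \<Rightarrow> (nat \<Rightarrow> real) \<Rightarrow> (nat \<Rightarrow> real) \<Rightarrow> nat \<Rightarrow> real" where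
  "z_vec n lam mu j =
     (if \<exists>i<mcount mu n. j = block_start n mu i then r_coef n lam mu (mu j) else 0)"

definition p_tilde :: "nat \<Rightarrow> (nat \<Rightarrow> real) \<Rightarrow> (nat \<Rightarrow> real) \<Rightarrow> complex mat" where
  "p_tilde n lam mu = mat (n+1) (n+1) (\<lambda>(a,b).
      if a = 0 \<and> b = 0 then complex_of_real (c_const n lam mu)
      else if a = 0 then cnj (complex_of_real (z_vec n lam mu (b-1)))
      else if b = 0 then complex_of_real (z_vec n lam mu (a-1))
      else if a = b then complex_of_real (mu (a-1)) else 0)"

definition V_space :: "nat \<Rightarrow> (nat \<Rightarrow> real) \<Rightarrow> (nat \<Rightarrow> real) \<Rightarrow> complex vec set" where
  "V_space n lam mu = Tmap n ` tangent_K_perp n (p_tilde n lam mu)"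

definition U_space :: "nat \<Rightarrow> (nat \<Rightarrow> real) \<Rightarrow> (nat \<Rightarrow> real) \<Rightarrow> complex vec set" where
  "U_space n lam mu = Tmap n ` (tangent_K n (p_tilde n lam mu) \<inter> tangent_K_perp n (p_tilde n lam mu))"

definition V_block :: "nat \<Rightarrow> (nat \<Rightarrow> real) \<Rightarrow> (nat \<Rightarrow> real) \<Rightarrow> nat \<Rightarrow> complex vec set" where
  "V_block n lam mu i = block_proj n mu i ` V_space n lam mu"

definition U_block :: "nat \<Rightarrow> (nat \<Rightarrow> real) \<Rightarrow> (nat \<Rightarrow> real) \<Rightarrow> nat \<Rightarrow> complex vec set" where
  "U_block n lam mu i = block_proj n mu i ` U_space n lam mu"

definition L_group :: "nat \<Rightarrow> (nat \<Rightarrow> real) \<Rightarrow> (nat \<Rightarrow> real) \<Rightarrow> nat \<Rightarrow> complex mat set" where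
  "L_group n lam mu i =
     (let d = block_size n mu i in
      if is_M n lam mu (dvals mu n ! i)
      then {g \<in> unitary_grp d. g $$ (0,0) = 1 \<and> (\<forall>j. 0 < j \<and> j < d \<longrightarrow> g $$ (0,j) = 0 \<and> g $$ (j,0) = 0)}
      else unitary_grp d)"

definition coset :: "complex vec set \<Rightarrow> complex vec \<Rightarrow> complex vec set" where
  "coset U v = (\<lambda>u. v + u) ` U"

definition quot :: "complex vec set \<Rightarrow> complex vec set \<Rightarrow> complex vec set set" where
  "quot V U = coset U ` V"

definition quot_rep_iso :: "complex vec set \<Rightarrow> complex vec set \<Rightarrow> complex mat set \<Rightarrow> complex vec set \<Rightarrow> bool" where
  "quot_rep_iso V U G W \<longleftrightarrow>
     (\<exists>phi. bij_betw phi (quot V U) W \<and>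
        (\<forall>a::real. \<forall>x\<in>V. \<forall>y\<in>V.
            phi (coset U (complex_of_real a \<cdot>\<^sub>v x + y)) = complex_of_real a \<cdot>\<^sub>v phi (coset U x) + phi (coset U y)) \<and>
        (\<forall>g\<in>G. \<forall>x\<in>V. phi (coset U (g *\<^sub>v x)) = g *\<^sub>v phi (coset U x)))"

end

theory Submission
  imports Defs
begin


lemma dc_card:
  fixes S :: "nat set"
  assumes "S \<subseteq> {..<N}" "\<And>i j. i \<le> j \<Longrightarrow> j \<in> S \<Longrightarrow> i \<in> S"
  shows "S = {..<card S}"
proof -
  have fin: "finite S" using assms(1) finite_subset by blast
  show ?thesis
  proof (intro equalityI subsetI)
    fix j assume "j \<in> S"
    have "{..j} \<subseteq> S"
    proof
      fix i assume "i \<in> {..j}"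
      thus "i \<in> S" using assms(2)[of i j] \<open>j \<in> S\<close> by simp
    qed
    hence "card {..j} \<le> card S" using card_mono fin by blast
    thus "j \<in> {..<card S}" by simp
  next
    fix j assume j: "j \<in> {..<card S}"
    show "j \<in> S"
    proof (rule ccontr)
      assume "j \<notin> S"
      have "S \<subseteq> {..<j}"
      proof
        fix i assume i: "i \<in> S"
        show "i \<in> {..<j}"
        proof (rule ccontr)
          assume "i \<notin> {..<j}"
          hence "j \<le> i" by simp
          hence "j \<in> S" using assms(2) i by blast
          thus False using \<open>j \<notin> S\<close> by simp
        qed
      qed
      hence "card S \<le> card {..<j}" by (intro card_mono) auto
      hence "card S \<le> j" by simp
      thus False using j by simp
    qed
  qed
qed

lemma sum_by_value:
  fixes f :: "nat \<Rightarrow> real" and h :: "real \<Rightarrow> real"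
  assumes "finite T" "f ` {..<N} \<subseteq> T"
  shows "(\<Sum>j<N. h (f j)) = (\<Sum>y\<in>T. h y * real (card {j. j < N \<and> f j = y}))"
proof -
  have "(\<Sum>j<N. h (f j)) = (\<Sum>y\<in>T. sum (\<lambda>j. h (f j)) {x \<in> {..<N}. f x = y})"
    using sum.group[OF _ assms(1) assms(2), of "\<lambda>j. h (f j)"] by simp
  also have "\<dots> = (\<Sum>y\<in>T. h y * real (card {j. j < N \<and> f j = y}))"
  proof (rule sum.cong[OF refl])
    fix y assume "y \<in> T"
    have e: "{x \<in> {..<N}. f x = y} = {j. j < N \<and> f j = y}" by auto
    have "sum (\<lambda>j. h (f j)) {x \<in> {..<N}. f x = y} = sum (\<lambda>j. h y) {x \<in> {..<N}. f x = y}"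
      by (rule sum.cong) auto
    thus "sum (\<lambda>j. h (f j)) {x \<in> {..<N}. f x = y} = h y * real (card {j. j < N \<and> f j = y})"
      unfolding e by (simp add: mult.commute)
  qed
  finally show ?thesis .
qed

lemma card_filter_sum:
  fixes P :: "nat \<Rightarrow> bool"
  shows "real (card {j. j < N \<and> P j}) = (\<Sum>j<N. if P j then 1 else 0)"
proof -
  have "{j. j < N \<and> P j} = {j \<in> {..<N}. P j}" by auto
  hence "real (card {j. j < N \<and> P j}) = (\<Sum>j\<in>{j \<in> {..<N}. P j}. 1)" by simp
  also have "\<dots> = (\<Sum>j<N. if P j then 1 else 0)" by (rule sum.inter_filter) simp
  finally show ?thesis .
qed

lemma prod_sign:
  fixes S :: "real set"
  assumes "finite S" "t \<notin> S"
  shows "(-1) ^ card {s\<in>S. t < s} * (\<Prod>s\<in>S. t - s) > 0"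
  using assms
proof (induction S rule: finite_induct)
  case empty
  then show ?case by simp
next
  case (insert x S)
  have IH: "(-1) ^ card {s\<in>S. t < s} * (\<Prod>s\<in>S. t - s) > 0" using insert by simp
  have fin: "finite {s\<in>S. t < s}" using insert by simp
  have pr: "(\<Prod>s\<in>insert x S. t - s) = (t - x) * (\<Prod>s\<in>S. t - s)" using insert by simp
  show ?case
  proof (cases "t < x")
    case True
    have "{s\<in>insert x S. t < s} = insert x {s\<in>S. t < s}" using True by auto
    hence ce: "card {s\<in>insert x S. t < s} = Suc (card {s\<in>S. t < s})" using insert fin by simp
    have "(-1) ^ card {s\<in>insert x S. t < s} * (\<Prod>s\<in>insert x S. t - s)
        = ((-1) ^ card {s\<in>S. t < s} * (\<Prod>s\<in>S. t - s)) * (x - t)" unfolding pr ce by (simp add: algebra_simps)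
    then show ?thesis using IH True by simp
  next
    case False
    hence xt: "x < t" using insert by auto
    have ce: "{s\<in>insert x S. t < s} = {s\<in>S. t < s}" using False by auto
    have "(-1) ^ card {s\<in>insert x S. t < s} * (\<Prod>s\<in>insert x S. t - s)
        = ((-1) ^ card {s\<in>S. t < s} * (\<Prod>s\<in>S. t - s)) * (t - x)" unfolding pr ce by (simp add: algebra_simps)
    then show ?thesis using IH xt by simp
  qed
qed

lemma prodlin_coeffs:
  fixes S :: "real set"
  assumes "finite S"
  shows "coeff (\<Prod>s\<in>S. [:-s,1:]) (card S) = 1 \<and> (\<forall>j>card S. coeff (\<Prod>s\<in>S. [:-s,1:]) j = 0)
     \<and> (card S \<ge> 1 \<longrightarrow> coeff (\<Prod>s\<in>S. [:-s,1:]) (card S - 1) = - (\<Sum>s\<in>S. s))"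
  using assms
proof (induction S rule: finite_induct)
  case empty
  then show ?case by (simp add: coeff_eq_0)
next
  case (insert x S)
  define P where "P = (\<Prod>s\<in>S. [:-s,1:])"
  have eq: "(\<Prod>s\<in>insert x S. [:-s,1:]) = Polynomial.smult (-x) P + pCons 0 P"
    using insert by (simp add: P_def mult_pCons_left)
  have co: "coeff (\<Prod>s\<in>insert x S. [:-s,1:]) j = -x * coeff P j + (if j = 0 then 0 else coeff P (j - 1))" for j
    unfolding eq by (cases j) auto
  have cs: "card (insert x S) = Suc (card S)" using insert by simp
  have IH: "coeff P (card S) = 1" "\<And>j. j > card S \<Longrightarrow> coeff P j = 0"
    "card S \<ge> 1 \<Longrightarrow> coeff P (card S - 1) = - (\<Sum>s\<in>S. s)"
    using insert.IH unfolding P_def by auto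
  have s0: "card S = 0 \<Longrightarrow> (\<Sum>s\<in>S. s) = 0" using insert by simp
  show ?case
  proof (intro conjI allI impI)
    show "coeff (\<Prod>s\<in>insert x S. [:-s,1:]) (card (insert x S)) = 1"
      unfolding co cs using IH by simp
    fix j assume "j > card (insert x S)"
    thus "coeff (\<Prod>s\<in>insert x S. [:-s,1:]) j = 0" unfolding co cs using IH by auto
  next
    show "coeff (\<Prod>s\<in>insert x S. [:-s,1:]) (card (insert x S) - 1) = - (\<Sum>s\<in>insert x S. s)"
      unfolding co cs using IH s0 insert by (cases "card S") auto
  qed
qed

lemma lagrange_id:
  fixes W M :: "real set" and c :: real and A :: "real \<Rightarrow> real"
  assumes fW: "finite W" and fM: "finite M" and cWM: "card W = card M + 1"
    and cdef: "c = (\<Sum>l\<in>W. l) - (\<Sum>t\<in>M. t)"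
    and Adef: "\<And>t. t \<in> M \<Longrightarrow> A t * (\<Prod>t'\<in>M-{t}. t - t') = - (\<Prod>l\<in>W. t - l)"
  shows "(\<Prod>l\<in>W. x - l) = (x - c) * (\<Prod>t\<in>M. x - t) - (\<Sum>t\<in>M. A t * (\<Prod>t'\<in>M-{t}. x - t'))"
proof -
  define G where "G = (\<Prod>s\<in>W. [:-s,1:])"
  define H where "H = (\<Prod>s\<in>M. [:-s,1:])"
  define Ht where "Ht t = (\<Prod>s\<in>M-{t}. [:-s,1:])" for t
  define Q where "Q = G - [:-c,1:] * H + (\<Sum>t\<in>M. Polynomial.smult (A t) (Ht t))"
  have pG: "poly G y = (\<Prod>l\<in>W. y - l)" for y by (simp add: G_def poly_prod)
  have pH: "poly H y = (\<Prod>l\<in>M. y - l)" for y by (simp add: H_def poly_prod)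
  have pHt: "poly (Ht t) y = (\<Prod>l\<in>M-{t}. y - l)" for t y by (simp add: Ht_def poly_prod)
  have pQ: "poly Q y = (\<Prod>l\<in>W. y - l) - (y - c) * (\<Prod>t\<in>M. y - t) + (\<Sum>t\<in>M. A t * (\<Prod>t'\<in>M-{t}. y - t'))" for y
  proof -
    have "poly Q y = poly G y - poly ([:-c,1:] * H) y + (\<Sum>t\<in>M. A t * poly (Ht t) y)"
      unfolding Q_def by (simp add: poly_sum)
    also have "poly ([:-c,1:] * H) y = (y - c) * poly H y" by (simp add: algebra_simps)
    finally show ?thesis unfolding pG pH pHt .
  qed
  define k where "k = card M"
  have PW: "coeff G (card W) = 1" "\<And>j. j > card W \<Longrightarrow> coeff G j = 0" "card W \<ge> 1 \<Longrightarrow> coeff G (card W - 1) = - (\<Sum>l\<in>W. l)"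
    using prodlin_coeffs[OF fW] unfolding G_def by blast+
  have cG: "coeff G (k+1) = 1" "\<And>j. j > k+1 \<Longrightarrow> coeff G j = 0" "coeff G k = - (\<Sum>l\<in>W. l)"
    using PW cWM unfolding k_def by simp_all
  have PM: "coeff H (card M) = 1" "\<And>j. j > card M \<Longrightarrow> coeff H j = 0" "card M \<ge> 1 \<Longrightarrow> coeff H (card M - 1) = - (\<Sum>l\<in>M. l)"
    using prodlin_coeffs[OF fM] unfolding H_def by blast+
  have cH: "coeff H k = 1" "\<And>j. j > k \<Longrightarrow> coeff H j = 0" "k \<ge> 1 \<Longrightarrow> coeff H (k - 1) = - (\<Sum>l\<in>M. l)"
    using PM unfolding k_def by simp_all
  have s0: "k = 0 \<Longrightarrow> (\<Sum>l\<in>M. l) = 0" using fM unfolding k_def by simp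
  have cHt: "coeff (Ht t) j = 0" if tM: "t \<in> M" and jk: "j \<ge> k" for t j
  proof -
    have ck: "card (M - {t}) = k - 1" using tM fM unfolding k_def by simp
    have "k \<noteq> 0" using tM fM unfolding k_def by auto
    hence "j > card (M - {t})" using ck jk by simp
    moreover have "finite (M - {t})" using fM by simp
    ultimately show ?thesis using prodlin_coeffs[of "M - {t}"] unfolding Ht_def by blast
  qed
  have cl: "coeff ([:-c,1:] * H) j = -c * coeff H j + (if j = 0 then 0 else coeff H (j - 1))" for j
    by (cases j) (simp_all add: mult_pCons_left)
  have cQ: "coeff Q j = 0" if jk: "j \<ge> k" for j
  proof -
    have "coeff Q j = coeff G j - coeff ([:-c,1:] * H) j + (\<Sum>t\<in>M. A t * coeff (Ht t) j)"
      by (simp add: Q_def coeff_sum)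
    also have "(\<Sum>t\<in>M. A t * coeff (Ht t) j) = 0" using cHt jk by simp
    finally have e: "coeff Q j = coeff G j - coeff ([:-c,1:] * H) j" by simp
    show ?thesis
    proof (cases "j = k")
      case True
      show ?thesis
      proof (cases "k = 0")
        case True
        thus ?thesis using e cl \<open>j = k\<close> cG(3) cH(1) s0 cdef by simp
      next
        case False
        thus ?thesis using e cl \<open>j = k\<close> cG(3) cH(1) cH(3) cdef by simp
      qed
    next
      case False
      hence jk1: "j > k" using jk by simp
      show ?thesis
      proof (cases "j = k + 1")
        case True
        thus ?thesis using e cl cG(1) cH(2) cH(1) by simp
      next
        case False
        hence "j > k + 1" using jk1 by simp
        thus ?thesis using e cl cG(2) cH(2) by simp
      qed
    qed
  qed
  have Q0: "Q = 0"
  proof (rule ccontr)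
    assume Qn: "Q \<noteq> 0"
    have roots: "M \<subseteq> {x. poly Q x = 0}"
    proof
      fix t assume tM: "t \<in> M"
      have ht: "(\<Prod>t'\<in>M. t - t') = 0" by (rule prod_zero) (use tM fM in auto)
      have sp: "(\<Sum>t'\<in>M. A t' * (\<Prod>t''\<in>M-{t'}. t - t'')) = A t * (\<Prod>t''\<in>M-{t}. t - t'')
             + (\<Sum>t'\<in>M-{t}. A t' * (\<Prod>t''\<in>M-{t'}. t - t''))"
        by (rule sum.remove[OF fM tM])
      have z: "(\<Sum>t'\<in>M-{t}. A t' * (\<Prod>t''\<in>M-{t'}. t - t'')) = 0"
      proof (rule sum.neutral, rule ballI)
        fix t' assume t': "t' \<in> M - {t}"
        have "(\<Prod>t''\<in>M-{t'}. t - t'') = 0" by (rule prod_zero) (use t' tM fM in auto)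
        thus "A t' * (\<Prod>t''\<in>M-{t'}. t - t'') = 0" by simp
      qed
      have "poly Q t = 0" unfolding pQ ht sp z using Adef[OF tM] by simp
      thus "t \<in> {x. poly Q x = 0}" by simp
    qed
    have "finite {x. poly Q x = 0}" using Qn poly_roots_finite by blast
    hence "card M \<le> card {x. poly Q x = 0}" using roots card_mono by blast
    also have "\<dots> \<le> degree Q" using card_poly_roots_bound[OF Qn] .
    finally have "k \<le> degree Q" unfolding k_def .
    hence "coeff Q (degree Q) = 0" using cQ by simp
    thus False using Qn by simp
  qed
  show ?thesis using pQ[of x] unfolding Q0 by simp
qed


locale interl =
  fixes n :: nat and lam mu :: "nat \<Rightarrow> real"
  assumes il1: "\<And>j. j < n \<Longrightarrow> mu j \<le> lam j"
    and il2: "\<And>j. j < n \<Longrightarrow> lam (j+1) \<le> mu j"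
begin

lemma mu_anti: "i \<le> j \<Longrightarrow> j < n \<Longrightarrow> mu j \<le> mu i"
proof (induction j)
  case 0 thus ?case by simp
next
  case (Suc j)
  show ?case
  proof (cases "i = Suc j")
    case True thus ?thesis by simp
  next
    case False
    hence "i \<le> j" using Suc.prems by simp
    hence "mu j \<le> mu i" using Suc by simp
    moreover have "mu (Suc j) \<le> mu j" using il1[of "Suc j"] il2[of j] Suc.prems by simp
    ultimately show ?thesis by simp
  qed
qed

definition cntL where "cntL P = card {j. j < n+1 \<and> P (lam j)}"
definition cntM where "cntM P = card {j. j < n \<and> P (mu j)}"

lemma cnt_bounds:
  assumes up: "\<And>y y'. P y \<Longrightarrow> y \<le> y' \<Longrightarrow> P y'"
  shows "cntM P \<le> cntL P" "cntL P \<le> cntM P + 1"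
proof -
  have "{j. j < n \<and> P (mu j)} \<subseteq> {j. j < n+1 \<and> P (lam j)}" using il1 up by fastforce
  thus "cntM P \<le> cntL P" unfolding cntM_def cntL_def by (intro card_mono) auto
  have "{j. j < n+1 \<and> P (lam j)} \<subseteq> insert 0 (Suc ` {j. j < n \<and> P (mu j)})"
  proof
    fix j assume j: "j \<in> {j. j < n+1 \<and> P (lam j)}"
    show "j \<in> insert 0 (Suc ` {j. j < n \<and> P (mu j)})"
    proof (cases j)
      case 0 thus ?thesis by simp
    next
      case (Suc k)
      hence "k < n" "P (lam (k+1))" using j by auto
      hence "P (mu k)" using il2[of k] up by blast
      thus ?thesis using Suc \<open>k<n\<close> by blast
    qed
  qed
  hence "cntL P \<le> card (insert 0 (Suc ` {j. j < n \<and> P (mu j)}))" unfolding cntL_def by (intro card_mono) auto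
  also have "\<dots> \<le> Suc (card (Suc ` {j. j < n \<and> P (mu j)}))" by (simp add: card_insert_if)
  also have "card (Suc ` {j. j < n \<and> P (mu j)}) = cntM P" unfolding cntM_def by (simp add: card_image)
  finally show "cntL P \<le> cntM P + 1" by simp
qed

lemma multL_split: "mult lam (n+1) x = cntL (\<lambda>y. x \<le> y) - cntL (\<lambda>y. x < y)"
    "cntL (\<lambda>y. x < y) \<le> cntL (\<lambda>y. x \<le> y)"
proof -
  have s: "{j. j < n+1 \<and> x < lam j} \<subseteq> {j. j < n+1 \<and> x \<le> lam j}" by auto
  have "{j. j < n+1 \<and> lam j = x} = {j. j < n+1 \<and> x \<le> lam j} - {j. j < n+1 \<and> x < lam j}" by auto
  thus "mult lam (n+1) x = cntL (\<lambda>y. x \<le> y) - cntL (\<lambda>y. x < y)"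
    unfolding mult_def cntL_def using s by (simp add: card_Diff_subset)
  show "cntL (\<lambda>y. x < y) \<le> cntL (\<lambda>y. x \<le> y)" unfolding cntL_def using s by (intro card_mono) auto
qed

lemma multM_split: "mult mu n x = cntM (\<lambda>y. x \<le> y) - cntM (\<lambda>y. x < y)"
    "cntM (\<lambda>y. x < y) \<le> cntM (\<lambda>y. x \<le> y)"
proof -
  have s: "{j. j < n \<and> x < mu j} \<subseteq> {j. j < n \<and> x \<le> mu j}" by auto
  have "{j. j < n \<and> mu j = x} = {j. j < n \<and> x \<le> mu j} - {j. j < n \<and> x < mu j}" by auto
  thus "mult mu n x = cntM (\<lambda>y. x \<le> y) - cntM (\<lambda>y. x < y)"
    unfolding mult_def cntM_def using s by (simp add: card_Diff_subset)
  show "cntM (\<lambda>y. x < y) \<le> cntM (\<lambda>y. x \<le> y)" unfolding cntM_def using s by (intro card_mono) auto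
qed

definition dif :: "real \<Rightarrow> real" where
  "dif x = real (mult lam (n+1) x) - real (mult mu n x)"

lemma dif_cases: "dif x = -1 \<or> dif x = 0 \<or> dif x = 1"
  and dif_M: "dif x = -1 \<Longrightarrow> real (cntL (\<lambda>y. x < y)) = real (cntM (\<lambda>y. x < y)) + 1"
proof -
  have a: "cntM (\<lambda>y. x \<le> y) \<le> cntL (\<lambda>y. x \<le> y)" "cntL (\<lambda>y. x \<le> y) \<le> cntM (\<lambda>y. x \<le> y) + 1"
    by (rule cnt_bounds; auto)+
  have b: "cntM (\<lambda>y. x < y) \<le> cntL (\<lambda>y. x < y)" "cntL (\<lambda>y. x < y) \<le> cntM (\<lambda>y. x < y) + 1"
    by (rule cnt_bounds; auto)+
  have d: "dif x = (real (cntL (\<lambda>y. x \<le> y)) - real (cntM (\<lambda>y. x \<le> y)))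
     - (real (cntL (\<lambda>y. x < y)) - real (cntM (\<lambda>y. x < y)))"
    unfolding dif_def multL_split(1) multM_split(1) using multL_split(2) multM_split(2)
    by (simp add: of_nat_diff)
  have "cntL (\<lambda>y. x \<le> y) = cntM (\<lambda>y. x \<le> y) \<or> cntL (\<lambda>y. x \<le> y) = cntM (\<lambda>y. x \<le> y) + 1"
    using a by linarith
  hence ia: "real (cntL (\<lambda>y. x \<le> y)) - real (cntM (\<lambda>y. x \<le> y)) \<in> {0,1}" by auto
  have "cntL (\<lambda>y. x < y) = cntM (\<lambda>y. x < y) \<or> cntL (\<lambda>y. x < y) = cntM (\<lambda>y. x < y) + 1"
    using b by linarith
  hence ib: "real (cntL (\<lambda>y. x < y)) - real (cntM (\<lambda>y. x < y)) \<in> {0,1}" by auto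
  show "dif x = -1 \<or> dif x = 0 \<or> dif x = 1" using ia ib unfolding d by auto
  show "dif x = -1 \<Longrightarrow> real (cntL (\<lambda>y. x < y)) = real (cntM (\<lambda>y. x < y)) + 1"
    using ia ib unfolding d by auto
qed

definition Vall where "Vall = lam ` {..<n+1} \<union> mu ` {..<n}"
definition Wset where "Wset = {x\<in>Vall. dif x = 1}"
definition Mset where "Mset = {x\<in>Vall. dif x = -1}"

lemma fin_Vall: "finite Vall" unfolding Vall_def by simp
lemma fin_W: "finite Wset" unfolding Wset_def using fin_Vall by simp
lemma fin_M: "finite Mset" unfolding Mset_def using fin_Vall by simp

lemma KEY:
  fixes h :: "real \<Rightarrow> real"
  shows "(\<Sum>j<n+1. h (lam j)) - (\<Sum>j<n. h (mu j)) = (\<Sum>x\<in>Wset. h x) - (\<Sum>x\<in>Mset. h x)"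
proof -
  have L: "(\<Sum>j<n+1. h (lam j)) = (\<Sum>y\<in>Vall. h y * real (mult lam (n+1) y))"
    unfolding mult_def by (rule sum_by_value) (auto simp: Vall_def)
  have M: "(\<Sum>j<n. h (mu j)) = (\<Sum>y\<in>Vall. h y * real (mult mu n y))"
    unfolding mult_def by (rule sum_by_value) (auto simp: Vall_def)
  have "(\<Sum>j<n+1. h (lam j)) - (\<Sum>j<n. h (mu j)) = (\<Sum>y\<in>Vall. h y * dif y)"
    unfolding L M dif_def by (simp add: sum_subtractf right_diff_distrib)
  also have "\<dots> = (\<Sum>y\<in>Vall. (if dif y = 1 then h y else 0) - (if dif y = -1 then h y else 0))"
  proof (rule sum.cong[OF refl])
    fix y show "h y * dif y = (if dif y = 1 then h y else 0) - (if dif y = -1 then h y else 0)"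
      using dif_cases[of y] by auto
  qed
  also have "\<dots> = (\<Sum>y\<in>Vall. if dif y = 1 then h y else 0) - (\<Sum>y\<in>Vall. if dif y = -1 then h y else 0)"
    by (simp add: sum_subtractf)
  also have "(\<Sum>y\<in>Vall. if dif y = 1 then h y else 0) = (\<Sum>x\<in>Wset. h x)"
    unfolding Wset_def using fin_Vall by (simp add: sum.inter_filter)
  also have "(\<Sum>y\<in>Vall. if dif y = -1 then h y else 0) = (\<Sum>x\<in>Mset. h x)"
    unfolding Mset_def using fin_Vall by (simp add: sum.inter_filter)
  finally show ?thesis .
qed

lemma card_WM: "card Wset = card Mset + 1"
proof -
  have "real (card Wset) - real (card Mset) = 1" using KEY[of "\<lambda>_. 1"] by simp
  thus ?thesis by linarith
qed

lemma sum_WM: "c_const n lam mu = (\<Sum>x\<in>Wset. x) - (\<Sum>x\<in>Mset. x)"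
proof -
  have "{..n} = {..<n+1}" by auto
  thus ?thesis unfolding c_const_def using KEY[of "\<lambda>x. x"] by simp
qed

lemma above_WM:
  assumes "t \<in> Mset"
  shows "card {x\<in>Wset. t < x} = card {x\<in>Mset. t < x} + 1"
proof -
  have d: "dif t = -1" using assms unfolding Mset_def by simp
  have "real (cntL (\<lambda>y. t < y)) - real (cntM (\<lambda>y. t < y))
      = (\<Sum>x\<in>Wset. if t < x then 1 else 0) - (\<Sum>x\<in>Mset. if t < x then 1 else 0)"
    unfolding cntL_def cntM_def card_filter_sum by (rule KEY)
  also have "(\<Sum>x\<in>Wset. if t < x then 1 else 0) = real (card {x\<in>Wset. t < x})"
    using fin_W by (simp add: sum.inter_filter[symmetric])
  also have "(\<Sum>x\<in>Mset. if t < x then 1 else 0) = real (card {x\<in>Mset. t < x})"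
    using fin_M by (simp add: sum.inter_filter[symmetric])
  finally show ?thesis using dif_M[OF d] by linarith
qed

lemma isW_iff: "is_W n lam mu x \<longleftrightarrow> dif x = 1"
  unfolding is_W_def dif_def by linarith
lemma isM_iff: "is_M n lam mu x \<longleftrightarrow> dif x = -1"
  unfolding is_M_def dif_def by linarith
lemma isP_iff: "is_P n lam mu x \<longleftrightarrow> dif x = 0"
  unfolding is_P_def dif_def by linarith

lemma Wset_eq: "{l\<in>vals lam (n+1). is_W n lam mu l} = Wset"
proof (intro equalityI subsetI)
  fix x assume "x \<in> {l\<in>vals lam (n+1). is_W n lam mu l}"
  thus "x \<in> Wset" unfolding Wset_def Vall_def vals_def isW_iff by auto
next
  fix x assume x: "x \<in> Wset"
  hence "dif x = 1" unfolding Wset_def by simp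
  hence "mult lam (n+1) x \<noteq> 0" unfolding dif_def by auto
  hence "{j. j < n+1 \<and> lam j = x} \<noteq> {}" unfolding mult_def by (metis card.empty)
  hence "x \<in> vals lam (n+1)" unfolding vals_def by auto
  thus "x \<in> {l\<in>vals lam (n+1). is_W n lam mu l}" using \<open>dif x = 1\<close> isW_iff by simp
qed

lemma Mset_eq: "{l\<in>vals mu n. is_M n lam mu l} = Mset"
proof (intro equalityI subsetI)
  fix x assume "x \<in> {l\<in>vals mu n. is_M n lam mu l}"
  thus "x \<in> Mset" unfolding Mset_def Vall_def vals_def isM_iff by auto
next
  fix x assume x: "x \<in> Mset"
  hence "dif x = -1" unfolding Mset_def by simp
  hence "mult mu n x \<noteq> 0" unfolding dif_def by auto
  hence "{j. j < n \<and> mu j = x} \<noteq> {}" unfolding mult_def by (metis card.empty)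
  hence "x \<in> vals mu n" unfolding vals_def by auto
  thus "x \<in> {l\<in>vals mu n. is_M n lam mu l}" using \<open>dif x = -1\<close> isM_iff by simp
qed

definition Acoef :: "real \<Rightarrow> real" where
  "Acoef t = - (\<Prod>l\<in>Wset. t - l) * (\<Prod>t'\<in>Mset - {t}. 1 / (t - t'))"

lemma WM_disj: "t \<in> Mset \<Longrightarrow> t \<notin> Wset" unfolding Mset_def Wset_def by auto

lemma Acoef_pos:
  assumes tM: "t \<in> Mset"
  shows "Acoef t > 0"
proof -
  define P1 where "P1 = (\<Prod>l\<in>Wset. t - l)"
  define P2 where "P2 = (\<Prod>t'\<in>Mset - {t}. t - t')"
  have s1: "(-1) ^ card {s\<in>Wset. t < s} * P1 > 0" unfolding P1_def
    by (rule prod_sign[OF fin_W WM_disj[OF tM]])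
  have s2: "(-1) ^ card {s\<in>Mset - {t}. t < s} * P2 > 0" unfolding P2_def
    by (rule prod_sign) (use fin_M in auto)
  have "{s\<in>Mset - {t}. t < s} = {s\<in>Mset. t < s}" by auto
  hence s2': "(-1) ^ card {s\<in>Mset. t < s} * P2 > 0" using s2 by simp
  define e :: real where "e = (-1) ^ card {s\<in>Mset. t < s}"
  have e2: "e * e = 1" unfolding e_def by (simp add: power_mult_distrib[symmetric])
  have s1': "- e * P1 > 0" using s1 above_WM[OF tM] unfolding e_def by simp
  have s2'': "e * P2 > 0" using s2' unfolding e_def .
  have "(\<Prod>t'\<in>Mset - {t}. 1 / (t - t')) = 1 / P2" unfolding P2_def by (simp add: prod_dividef)
  hence "Acoef t = - P1 / P2" unfolding Acoef_def P1_def by simp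
  also have "\<dots> = (- e * P1) / (e * P2)"
  proof -
    have "e \<noteq> 0" unfolding e_def by simp
    thus ?thesis by simp
  qed
  finally have Ae: "Acoef t = (- e * P1) / (e * P2)" .
  show ?thesis unfolding Ae using s1' s2'' by (rule divide_pos_pos)
qed

lemma Acoef_eq: "t \<in> Mset \<Longrightarrow> Acoef t * (\<Prod>t'\<in>Mset-{t}. t - t') = - (\<Prod>l\<in>Wset. t - l)"
proof -
  assume tM: "t \<in> Mset"
  have nz: "(\<Prod>t'\<in>Mset-{t}. t - t') \<noteq> 0" using fin_M by simp
  have "(\<Prod>t'\<in>Mset - {t}. 1 / (t - t')) = 1 / (\<Prod>t'\<in>Mset-{t}. t - t')" by (simp add: prod_dividef)
  thus ?thesis unfolding Acoef_def using nz by simp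
qed

lemma F_iff:
  assumes vM: "v \<notin> Mset"
  shows "c_const n lam mu - v + (\<Sum>t\<in>Mset. Acoef t / (v - t)) = 0 \<longleftrightarrow> v \<in> Wset"
proof -
  define h where "h = (\<Prod>t\<in>Mset. v - t)"
  have hnz: "h \<noteq> 0" unfolding h_def using fin_M vM by auto
  have lag: "(\<Prod>l\<in>Wset. v - l) = (v - c_const n lam mu) * h - (\<Sum>t\<in>Mset. Acoef t * (\<Prod>t'\<in>Mset-{t}. v - t'))"
    unfolding h_def by (rule lagrange_id[OF fin_W fin_M card_WM sum_WM Acoef_eq])
  have ht: "(\<Prod>t'\<in>Mset-{t}. v - t') = h / (v - t)" if "t \<in> Mset" for t
  proof -
    have "h = (v - t) * (\<Prod>t'\<in>Mset-{t}. v - t')" unfolding h_def using that fin_M by (simp add: prod.remove)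
    moreover have "v - t \<noteq> 0" using that vM by auto
    ultimately show ?thesis by simp
  qed
  have "(\<Sum>t\<in>Mset. Acoef t * (\<Prod>t'\<in>Mset-{t}. v - t')) = h * (\<Sum>t\<in>Mset. Acoef t / (v - t))"
    unfolding sum_distrib_left by (rule sum.cong[OF refl]) (simp add: ht algebra_simps)
  hence "(\<Prod>l\<in>Wset. v - l) = - h * (c_const n lam mu - v + (\<Sum>t\<in>Mset. Acoef t / (v - t)))"
    using lag by (simp add: algebra_simps)
  hence "(\<Prod>l\<in>Wset. v - l) = 0 \<longleftrightarrow> c_const n lam mu - v + (\<Sum>t\<in>Mset. Acoef t / (v - t)) = 0"
    using hnz by simp
  moreover have "(\<Prod>l\<in>Wset. v - l) = 0 \<longleftrightarrow> v \<in> Wset" using fin_W by simp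
  ultimately show ?thesis by simp
qed

end


context interl begin

lemma gt_set: "{j. j<n \<and> v < mu j} = {..<cntM (\<lambda>y. v < y)}"
  unfolding cntM_def
proof (rule dc_card[of _ n])
  fix i j assume "i \<le> j" "j \<in> {j. j < n \<and> v < mu j}"
  thus "i \<in> {j. j < n \<and> v < mu j}" using mu_anti[of i j] by auto
qed auto

lemma ge_set: "{j. j<n \<and> v \<le> mu j} = {..<cntM (\<lambda>y. v \<le> y)}"
  unfolding cntM_def
proof (rule dc_card[of _ n])
  fix i j assume "i \<le> j" "j \<in> {j. j < n \<and> v \<le> mu j}"
  thus "i \<in> {j. j < n \<and> v \<le> mu j}" using mu_anti[of i j] by auto
qed auto

lemma fiber: "(j < n \<and> mu j = v) \<longleftrightarrow> (cntM (\<lambda>y. v < y) \<le> j \<and> j < cntM (\<lambda>y. v \<le> y))"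
proof -
  have "(j < n \<and> mu j = v) \<longleftrightarrow> j \<in> {j. j<n \<and> v \<le> mu j} \<and> j \<notin> {j. j<n \<and> v < mu j}" by auto
  also have "\<dots> \<longleftrightarrow> (cntM (\<lambda>y. v < y) \<le> j \<and> j < cntM (\<lambda>y. v \<le> y))" unfolding gt_set ge_set by auto
  finally show ?thesis .
qed

lemma ge_le_n: "cntM (\<lambda>y. v \<le> y) \<le> n"
  unfolding cntM_def by (rule order_trans[OF card_mono[of "{..<n}"]]) auto

lemma mult_pos: "v \<in> vals mu n \<Longrightarrow> mult mu n v \<ge> 1"
proof -
  assume "v \<in> vals mu n"
  then obtain j where "j < n" "mu j = v" unfolding vals_def by auto
  hence "{j. j < n \<and> mu j = v} \<noteq> {}" by auto
  moreover have "finite {j. j < n \<and> mu j = v}" by simp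
  ultimately show ?thesis unfolding mult_def by (simp add: Suc_le_eq card_gt_0_iff)
qed

lemma start_lt: "v \<in> vals mu n \<Longrightarrow> cntM (\<lambda>y. v < y) < cntM (\<lambda>y. v \<le> y)"
  using mult_pos multM_split by fastforce

lemma fin_vals: "finite (vals mu n)" unfolding vals_def by simp

lemma dv_set: "set (dvals mu n) = vals mu n"
  unfolding dvals_def using fin_vals by simp

lemma dv_len: "mcount mu n = length (dvals mu n)" unfolding mcount_def ..

lemma dv_distinct: "distinct (dvals mu n)" unfolding dvals_def by simp

lemma dv_dec: "i < j \<Longrightarrow> j < mcount mu n \<Longrightarrow> dvals mu n ! j < dvals mu n ! i"
proof -
  assume ij: "i < j" "j < mcount mu n"
  have "sorted_wrt (\<lambda>x y. y < x) (dvals mu n)"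
    unfolding dvals_def sorted_wrt_rev using strict_sorted_list_of_set by simp
  from sorted_wrt_nth_less[OF this ij(1)] ij(2) show ?thesis unfolding dv_len by simp
qed

lemma dv_in: "i < mcount mu n \<Longrightarrow> dvals mu n ! i \<in> vals mu n"
  using dv_set dv_len nth_mem by metis

lemma block_start_eq:
  assumes im: "i < mcount mu n"
  shows "block_start n mu i = cntM (\<lambda>y. dvals mu n ! i < y)"
proof -
  define D where "D = dvals mu n"
  define v where "v = D ! i"
  have inj: "inj_on ((!) D) {..<i}"
    using dv_distinct im unfolding D_def dv_len by (intro inj_on_nth) auto
  have img: "(!) D ` {..<i} = {t\<in>vals mu n. v < t}"
  proof (intro equalityI subsetI)
    fix t assume "t \<in> (!) D ` {..<i}"
    then obtain k where k: "k < i" "t = D ! k" by auto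
    thus "t \<in> {t\<in>vals mu n. v < t}" using dv_dec[OF k(1) im] dv_in[of k] im
      unfolding D_def v_def by auto
  next
    fix t assume t: "t \<in> {t\<in>vals mu n. v < t}"
    then obtain k where k: "k < length D" "D ! k = t" using dv_set unfolding D_def
      by (metis (no_types, lifting) in_set_conv_nth mem_Collect_eq)
    have "k < i"
    proof (rule ccontr)
      assume "\<not> k < i"
      hence "k = i \<or> i < k" by auto
      thus False using dv_dec[of i k] k t im unfolding D_def v_def dv_len by auto
    qed
    thus "t \<in> (!) D ` {..<i}" using k by auto
  qed
  have "block_start n mu i = (\<Sum>k<i. mult mu n (D ! k))"
    unfolding block_start_def block_size_def D_def ..
  also have "\<dots> = (\<Sum>t\<in>(!) D ` {..<i}. mult mu n t)" by (simp add: sum.reindex[OF inj] comp_def)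
  also have "\<dots> = (\<Sum>t\<in>{t\<in>vals mu n. v < t}. mult mu n t)" unfolding img ..
  finally have bs: "real (block_start n mu i) = (\<Sum>t\<in>{t\<in>vals mu n. v < t}. real (mult mu n t))" by simp
  have "real (cntM (\<lambda>y. v < y)) = (\<Sum>j<n. if v < mu j then 1 else 0)"
    unfolding cntM_def card_filter_sum ..
  also have "\<dots> = (\<Sum>y\<in>vals mu n. (if v < y then 1 else 0) * real (card {j. j < n \<and> mu j = y}))"
    by (rule sum_by_value[OF fin_vals]) (auto simp: vals_def)
  also have "\<dots> = (\<Sum>y\<in>vals mu n. if v < y then real (mult mu n y) else 0)"
    unfolding mult_def by (rule sum.cong) auto
  also have "\<dots> = (\<Sum>t\<in>{t\<in>vals mu n. v < t}. real (mult mu n t))"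
    using fin_vals by (simp add: sum.inter_filter)
  finally show ?thesis using bs unfolding v_def D_def by linarith
qed

lemma z_char:
  assumes "l < n"
  shows "z_vec n lam mu l = (if l = cntM (\<lambda>y. mu l < y) then r_coef n lam mu (mu l) else 0)"
proof (cases "\<exists>i<mcount mu n. l = block_start n mu i")
  case True
  then obtain i where i: "i < mcount mu n" "l = block_start n mu i" by auto
  define v where "v = dvals mu n ! i"
  have l: "l = cntM (\<lambda>y. v < y)" using block_start_eq[OF i(1)] i(2) unfolding v_def by simp
  have "mu l = v" using fiber[of l v] start_lt[OF dv_in[OF i(1)]] l ge_le_n[of v] unfolding v_def by auto
  then show ?thesis unfolding z_vec_def using True l by simp
next
  case False
  have "l \<noteq> cntM (\<lambda>y. mu l < y)"
  proof
    assume l: "l = cntM (\<lambda>y. mu l < y)"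
    have "mu l \<in> set (dvals mu n)" using dv_set assms unfolding vals_def by auto
    then obtain i where i: "i < mcount mu n" "dvals mu n ! i = mu l"
      unfolding dv_len by (metis in_set_conv_nth)
    thus False using False block_start_eq[OF i(1)] l by auto
  qed
  then show ?thesis unfolding z_vec_def using False by auto
qed

lemma r_zero: "t \<notin> Mset \<Longrightarrow> r_coef n lam mu t = 0"
proof -
  assume "t \<notin> Mset"
  hence "\<not> (t \<in> vals mu n \<and> is_M n lam mu t)" using Mset_eq by auto
  thus ?thesis unfolding r_coef_def by (rule if_not_P)
qed

lemma r_sq: "t \<in> vals mu n \<Longrightarrow> (r_coef n lam mu t)^2 = (if t \<in> Mset then Acoef t else 0)"
proof -
  assume tv: "t \<in> vals mu n"
  have e: "{ta \<in> vals mu n. is_M n lam mu ta \<and> ta \<noteq> t} = Mset - {t}"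
    using Mset_eq by auto
  show ?thesis
  proof (cases "t \<in> Mset")
    case True
    hence "is_M n lam mu t" using Mset_eq by auto
    hence "r_coef n lam mu t = sqrt (Acoef t)"
      unfolding r_coef_def Acoef_def using tv e Wset_eq by simp
    then show ?thesis using True Acoef_pos[OF True] by simp
  next
    case False
    then show ?thesis by (simp add: r_zero)
  qed
qed

lemma r_nz: "t \<in> Mset \<Longrightarrow> r_coef n lam mu t \<noteq> 0"
  using r_sq[of t] Acoef_pos[of t] Mset_eq by force

lemma z_sum:
  assumes vM: "v \<notin> Mset"
  shows "(\<Sum>l<n. (z_vec n lam mu l)^2 / (v - mu l)) = (\<Sum>t\<in>Mset. Acoef t / (v - t))"
proof -
  have "(\<Sum>l<n. (z_vec n lam mu l)^2 / (v - mu l))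
      = (\<Sum>y\<in>vals mu n. \<Sum>l\<in>{l\<in>{..<n}. mu l = y}. (z_vec n lam mu l)^2 / (v - mu l))"
    by (rule sum.group[symmetric]) (auto simp: vals_def)
  also have "\<dots> = (\<Sum>y\<in>vals mu n. (r_coef n lam mu y)^2 / (v - y))"
  proof (rule sum.cong[OF refl])
    fix y assume yv: "y \<in> vals mu n"
    have "(\<Sum>l\<in>{l\<in>{..<n}. mu l = y}. (z_vec n lam mu l)^2 / (v - mu l))
        = (\<Sum>l\<in>{l\<in>{..<n}. mu l = y}. if l = cntM (\<lambda>x. y < x) then (r_coef n lam mu y)^2 / (v - y) else 0)"
      by (rule sum.cong[OF refl]) (auto simp: z_char)
    also have "\<dots> = (r_coef n lam mu y)^2 / (v - y)"
    proof -
      have "cntM (\<lambda>x. y < x) \<in> {l\<in>{..<n}. mu l = y}"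
        using fiber[of "cntM (\<lambda>x. y < x)" y] start_lt[OF yv] by auto
      thus ?thesis by (simp add: sum.delta)
    qed
    finally show "(\<Sum>l\<in>{l\<in>{..<n}. mu l = y}. (z_vec n lam mu l)^2 / (v - mu l)) = (r_coef n lam mu y)^2 / (v - y)" .
  qed
  also have "\<dots> = (\<Sum>y\<in>vals mu n. if y \<in> Mset then Acoef y / (v - y) else 0)"
    by (rule sum.cong[OF refl]) (simp add: r_sq)
  also have "\<dots> = (\<Sum>t\<in>Mset. Acoef t / (v - t))"
  proof -
    have "Mset \<subseteq> vals mu n" using Mset_eq by auto
    hence "{y \<in> vals mu n. y \<in> Mset} = Mset" by auto
    thus ?thesis using fin_vals sum.inter_filter[of "vals mu n" "\<lambda>y. Acoef y / (v - y)" "\<lambda>y. y \<in> Mset"] by simp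
  qed
  finally show ?thesis .
qed

end


lemma mult_split0:
  assumes "A \<in> carrier_mat (Suc n) (Suc n)" "B \<in> carrier_mat (Suc n) (Suc n)" "i < Suc n" "j < Suc n"
  shows "(A * B) $$ (i,j) = A$$(i,0) * B$$(0,j) + (\<Sum>l<n. A$$(i,Suc l) * B$$(Suc l,j))"
  using assms by (simp add: scalar_prod_def atLeast0LessThan sum.lessThan_Suc_shift del: sum.lessThan_Suc)

lemma mtrace_mult:
  assumes "A \<in> carrier_mat N N" "B \<in> carrier_mat N N"
  shows "mtrace (A * B) = (\<Sum>i<N. \<Sum>j<N. A$$(i,j) * B$$(j,i))"
  using assms by (simp add: mtrace_def scalar_prod_def atLeast0LessThan)

lemma mtrace_swap:
  assumes "A \<in> carrier_mat N N" "B \<in> carrier_mat N N"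
  shows "mtrace (A * B) = mtrace (B * A)"
  unfolding mtrace_mult[OF assms] mtrace_mult[OF assms(2,1)]
  by (subst sum.swap) (simp add: mult.commute)

lemma mtrace_minus:
  assumes "A \<in> carrier_mat N N" "B \<in> carrier_mat N N"
  shows "mtrace (A - B) = mtrace A - mtrace B"
  using assms by (simp add: mtrace_def sum_subtractf)

lemma omega_eq:
  assumes P: "P \<in> carrier_mat N N" and X: "X \<in> carrier_mat N N" and Y: "Y \<in> carrier_mat N N"
  shows "omega P X Y = - (1 / \<i>) * mtrace (comm X P * Y)"
proof -
  have XY: "X * Y \<in> carrier_mat N N" and YX: "Y * X \<in> carrier_mat N N" and PX: "P * X \<in> carrier_mat N N"
    and XP: "X * P \<in> carrier_mat N N" and PY: "P * Y \<in> carrier_mat N N" using P X Y by auto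
  have e: "P * (X * Y - Y * X) = P * (X * Y) - P * (Y * X)"
    by (rule mult_minus_distrib_mat[OF P XY YX])
  have t1: "mtrace (P * comm X Y) = mtrace (P * X * Y) - mtrace (X * P * Y)"
  proof -
    have "mtrace (P * comm X Y) = mtrace (P * (X * Y)) - mtrace (P * (Y * X))"
      unfolding comm_def e using P XY YX by (intro mtrace_minus[where N=N]) auto
    also have "P * (X * Y) = P * X * Y" using assoc_mult_mat[OF P X Y] by simp
    also have "P * (Y * X) = P * Y * X" using assoc_mult_mat[OF P Y X] by simp
    also have "mtrace (P * Y * X) = mtrace (X * (P * Y))" using PY X by (intro mtrace_swap) auto
    also have "X * (P * Y) = X * P * Y" using assoc_mult_mat[OF X P Y] by simp
    finally show ?thesis .
  qed
  have t2: "mtrace (comm X P * Y) = mtrace (X * P * Y) - mtrace (P * X * Y)"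
  proof -
    have "comm X P * Y = X * P * Y - P * X * Y" unfolding comm_def
      by (rule minus_mult_distrib_mat[OF XP PX Y])
    thus ?thesis using XP PX Y by (simp add: mtrace_minus[of "X * P * Y" N "P * X * Y"])
  qed
  show ?thesis unfolding omega_def t1 t2 by (simp add: algebra_simps)
qed

lemma double_delta:
  fixes g :: "nat \<Rightarrow> nat \<Rightarrow> complex"
  assumes "a < N" "b < N"
  shows "(\<Sum>i<N. \<Sum>j<N. if j = a \<and> i = b then g i j else 0) = g b a"
proof -
  have "(\<Sum>i<N. \<Sum>j<N. if j = a \<and> i = b then g i j else 0) = (\<Sum>i<N. if i = b then g i a else 0)"
  proof (rule sum.cong[OF refl])
    fix i assume "i \<in> {..<N}"
    show "(\<Sum>j<N. if j = a \<and> i = b then g i j else 0) = (if i = b then g i a else 0)"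
      using assms by (cases "i = b") simp_all
  qed
  also have "\<dots> = g b a" using assms by simp
  finally show ?thesis .
qed

definition Emat :: "nat \<Rightarrow> nat \<Rightarrow> nat \<Rightarrow> complex \<Rightarrow> complex \<Rightarrow> complex mat" where
  "Emat N a b \<alpha> \<beta> = mat N N (\<lambda>(x,y). (if x = a \<and> y = b then \<alpha> else 0) + (if x = b \<and> y = a then \<beta> else 0))"

lemma Emat_entry: "i < N \<Longrightarrow> j < N \<Longrightarrow> Emat N a b \<alpha> \<beta> $$ (j,i) = (if j = a \<and> i = b then \<alpha> else 0) + (if j = b \<and> i = a then \<beta> else 0)"
  by (simp add: Emat_def)

lemma pw: "i < N \<Longrightarrow> j < N \<Longrightarrow> C$$(i,j) * Emat N a b \<alpha> \<beta> $$ (j,i) = (if j = a \<and> i = b then C$$(i,j) * \<alpha> else 0) + (if j = b \<and> i = a then C$$(i,j) * \<beta> else 0)"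
  by (simp only: Emat_entry distrib_left if_distrib[of "\<lambda>x. C$$(i,j) * x"] mult_zero_right)

lemma Emat_carrier: "Emat N a b \<alpha> \<beta> \<in> carrier_mat N N" unfolding Emat_def by simp

lemma mtrace_Emat:
  assumes C: "C \<in> carrier_mat N N" and ab: "a < N" "b < N"
  shows "mtrace (C * Emat N a b \<alpha> \<beta>) = C$$(b,a) * \<alpha> + C$$(a,b) * \<beta>"
proof -
  have "mtrace (C * Emat N a b \<alpha> \<beta>) = (\<Sum>i<N. \<Sum>j<N. C$$(i,j) * Emat N a b \<alpha> \<beta> $$ (j,i))"
    by (rule mtrace_mult[OF C Emat_carrier])
  also have "\<dots> = (\<Sum>i<N. \<Sum>j<N. (if j = a \<and> i = b then C$$(i,j) * \<alpha> else 0) + (if j = b \<and> i = a then C$$(i,j) * \<beta> else 0))"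
    by (intro sum.cong refl pw) simp_all
  also have "\<dots> = (\<Sum>i<N. \<Sum>j<N. if j = a \<and> i = b then C$$(i,j) * \<alpha> else 0) + (\<Sum>i<N. \<Sum>j<N. if j = b \<and> i = a then C$$(i,j) * \<beta> else 0)"
    by (simp only: sum.distrib)
  also have "\<dots> = C$$(b,a) * \<alpha> + C$$(a,b) * \<beta>"
    by (simp only: double_delta[OF ab(1) ab(2)] double_delta[OF ab(2) ab(1)])
  finally show ?thesis .
qed
lemma Emat_adj:
  assumes "cnj \<beta> = - \<alpha>"
  shows "adj (Emat N a b \<alpha> \<beta>) = - Emat N a b \<alpha> \<beta>"
proof -
  have "cnj (cnj \<beta>) = cnj (- \<alpha>)" using assms by simp
  hence b: "cnj \<alpha> = - \<beta>" by simp
  show ?thesis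
  proof (rule eq_matI)
    fix i j assume i: "i < dim_row (- Emat N a b \<alpha> \<beta>)" and j: "j < dim_col (- Emat N a b \<alpha> \<beta>)"
    hence ij: "i < N" "j < N" by (simp_all add: Emat_def)
    have l: "adj (Emat N a b \<alpha> \<beta>) $$ (i,j) = cnj ((if j = a \<and> i = b then \<alpha> else 0) + (if j = b \<and> i = a then \<beta> else 0))"
      using ij by (simp add: adj_def Emat_def)
    have r: "(- Emat N a b \<alpha> \<beta>) $$ (i,j) = - ((if i = a \<and> j = b then \<alpha> else 0) + (if i = b \<and> j = a then \<beta> else 0))"
      using ij by (simp add: Emat_def)
    have l2: "cnj ((if j = a \<and> i = b then \<alpha> else 0) + (if j = b \<and> i = a then \<beta> else 0))
        = (if j = a \<and> i = b then - \<beta> else 0) + (if j = b \<and> i = a then - \<alpha> else 0)"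
      by (simp only: complex_cnj_add if_distrib[of cnj] complex_cnj_zero assms b)
    have r2: "- ((if i = a \<and> j = b then \<alpha> else 0) + (if i = b \<and> j = a then \<beta> else 0))
        = (if i = b \<and> j = a then - \<beta> else 0) + (if i = a \<and> j = b then - \<alpha> else 0)"
      by (simp only: minus_add_distrib if_distrib[of uminus] minus_zero add.commute)
    have c1: "(j = a \<and> i = b) = (i = b \<and> j = a)" "(j = b \<and> i = a) = (i = a \<and> j = b)" by blast+
    have L: "adj (Emat N a b \<alpha> \<beta>) $$ (i,j) = (if j = a \<and> i = b then - \<beta> else 0) + (if j = b \<and> i = a then - \<alpha> else 0)"
      using l l2 by (rule trans)
    have R: "(- Emat N a b \<alpha> \<beta>) $$ (i,j) = (if i = b \<and> j = a then - \<beta> else 0) + (if i = a \<and> j = b then - \<alpha> else 0)"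
      using r r2 by (rule trans)
    show "adj (Emat N a b \<alpha> \<beta>) $$ (i,j) = (- Emat N a b \<alpha> \<beta>) $$ (i,j)"
      unfolding L R c1 ..
  qed (simp_all add: adj_def Emat_def)
qed


context interl begin

abbreviation PP where "PP \<equiv> p_tilde n lam mu"
abbreviation zc :: "nat \<Rightarrow> complex" where "zc l \<equiv> complex_of_real (z_vec n lam mu l)"
abbreviation ccc where "ccc \<equiv> complex_of_real (c_const n lam mu)"

lemma PP_carrier: "PP \<in> carrier_mat (Suc n) (Suc n)" by (simp add: p_tilde_def)
lemma PP_00: "PP $$ (0,0) = ccc" by (simp add: p_tilde_def)
lemma PP_k0: "k < n \<Longrightarrow> PP $$ (Suc k, 0) = zc k" by (simp add: p_tilde_def)
lemma PP_0k: "k < n \<Longrightarrow> PP $$ (0, Suc k) = zc k" by (simp add: p_tilde_def)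
lemma PP_kl: "k < n \<Longrightarrow> l < n \<Longrightarrow> PP $$ (Suc k, Suc l) = (if k = l then complex_of_real (mu k) else 0)"
  by (simp add: p_tilde_def)

lemma commL:
  assumes X: "X \<in> carrier_mat (Suc n) (Suc n)" and k: "k < n"
  shows "comm X PP $$ (Suc k, 0) = (ccc - of_real (mu k)) * X$$(Suc k,0) + (\<Sum>l<n. X$$(Suc k,Suc l) * zc l) - zc k * X$$(0,0)"
proof -
  have a: "(X * PP) $$ (Suc k, 0) = X$$(Suc k,0) * ccc + (\<Sum>l<n. X$$(Suc k,Suc l) * zc l)"
  proof -
    have "(X * PP) $$ (Suc k, 0) = X$$(Suc k,0) * PP$$(0,0) + (\<Sum>l<n. X$$(Suc k,Suc l) * PP$$(Suc l,0))"
      using mult_split0[OF X PP_carrier, of "Suc k" 0] k by simp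
    also have "(\<Sum>l<n. X$$(Suc k,Suc l) * PP$$(Suc l,0)) = (\<Sum>l<n. X$$(Suc k,Suc l) * zc l)"
      by (rule sum.cong[OF refl]) (simp add: PP_k0)
    finally show ?thesis by (simp add: PP_00)
  qed
  have b: "(PP * X) $$ (Suc k, 0) = zc k * X$$(0,0) + of_real (mu k) * X$$(Suc k, 0)"
  proof -
    have "(PP * X) $$ (Suc k, 0) = PP$$(Suc k,0) * X$$(0,0) + (\<Sum>l<n. PP$$(Suc k,Suc l) * X$$(Suc l,0))"
      using mult_split0[OF PP_carrier X, of "Suc k" 0] k by simp
    also have "(\<Sum>l<n. PP$$(Suc k,Suc l) * X$$(Suc l,0)) = (\<Sum>l<n. if l = k then of_real (mu k) * X$$(Suc l,0) else 0)"
      by (rule sum.cong[OF refl]) (use k in \<open>auto simp: PP_kl\<close>)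
    also have "\<dots> = of_real (mu k) * X$$(Suc k,0)" using k by simp
    finally show ?thesis using k by (simp add: PP_k0)
  qed
  have "comm X PP $$ (Suc k, 0) = (X * PP) $$ (Suc k, 0) - (PP * X) $$ (Suc k, 0)"
    unfolding comm_def using X PP_carrier k by simp
  thus ?thesis unfolding a b by (simp add: algebra_simps)
qed

lemma commB:
  assumes X: "X \<in> carrier_mat (Suc n) (Suc n)" and k: "k < n" and l: "l < n"
  shows "comm X PP $$ (Suc k, Suc l) = X$$(Suc k,0) * zc l + X$$(Suc k,Suc l) * (of_real (mu l) - of_real (mu k)) - zc k * X$$(0,Suc l)"
proof -
  have a: "(X * PP) $$ (Suc k, Suc l) = X$$(Suc k,0) * zc l + X$$(Suc k,Suc l) * of_real (mu l)"
  proof -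
    have "(X * PP) $$ (Suc k, Suc l) = X$$(Suc k,0) * PP$$(0,Suc l) + (\<Sum>j<n. X$$(Suc k,Suc j) * PP$$(Suc j,Suc l))"
      using mult_split0[OF X PP_carrier, of "Suc k" "Suc l"] k l by simp
    also have "(\<Sum>j<n. X$$(Suc k,Suc j) * PP$$(Suc j,Suc l)) = (\<Sum>j<n. if j = l then X$$(Suc k,Suc j) * of_real (mu l) else 0)"
      by (rule sum.cong[OF refl]) (use l in \<open>auto simp: PP_kl\<close>)
    also have "\<dots> = X$$(Suc k,Suc l) * of_real (mu l)" using l by simp
    finally show ?thesis using l by (simp add: PP_0k)
  qed
  have b: "(PP * X) $$ (Suc k, Suc l) = zc k * X$$(0,Suc l) + of_real (mu k) * X$$(Suc k,Suc l)"
  proof -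
    have "(PP * X) $$ (Suc k, Suc l) = PP$$(Suc k,0) * X$$(0,Suc l) + (\<Sum>j<n. PP$$(Suc k,Suc j) * X$$(Suc j,Suc l))"
      using mult_split0[OF PP_carrier X, of "Suc k" "Suc l"] k l by simp
    also have "(\<Sum>j<n. PP$$(Suc k,Suc j) * X$$(Suc j,Suc l)) = (\<Sum>j<n. if j = k then of_real (mu k) * X$$(Suc j,Suc l) else 0)"
      by (rule sum.cong[OF refl]) (use k in \<open>auto simp: PP_kl\<close>)
    also have "\<dots> = of_real (mu k) * X$$(Suc k,Suc l)" using k by simp
    finally show ?thesis using k by (simp add: PP_k0)
  qed
  have "comm X PP $$ (Suc k, Suc l) = (X * PP) $$ (Suc k, Suc l) - (PP * X) $$ (Suc k, Suc l)"
    unfolding comm_def using X PP_carrier k l by simp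
  thus ?thesis unfolding a b by (simp add: algebra_simps)
qed

lemma comm_carrier: "X \<in> carrier_mat (Suc n) (Suc n) \<Longrightarrow> comm X PP \<in> carrier_mat (Suc n) (Suc n)"
  unfolding comm_def using PP_carrier by auto

lemma perp_B:
  assumes "A \<in> tangent_K_perp n PP"
  obtains X where "X \<in> u_alg (Suc n)" "A = comm X PP" "\<And>k l. k < n \<Longrightarrow> l < n \<Longrightarrow> A $$ (Suc k, Suc l) = 0"
proof -
  from assms obtain X where X: "X \<in> u_alg (Suc n)" "A = comm X PP" and om: "\<forall>Y\<in>k_alg n. omega PP X Y = 0"
    unfolding tangent_K_perp_def by auto
  have Xc: "X \<in> carrier_mat (Suc n) (Suc n)" using X unfolding u_alg_def by simp
  have Cc: "comm X PP \<in> carrier_mat (Suc n) (Suc n)" using comm_carrier[OF Xc] .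
  have tr0: "mtrace (comm X PP * Y) = 0" if "Y \<in> k_alg n" for Y
  proof -
    have Yc: "Y \<in> carrier_mat (Suc n) (Suc n)" using that unfolding k_alg_def u_alg_def by simp
    have "omega PP X Y = 0" using om that by blast
    thus ?thesis unfolding omega_eq[OF PP_carrier Xc Yc] by simp
  qed
  have Ek: "Emat (Suc n) (Suc k) (Suc l) \<alpha> \<beta> \<in> k_alg n" if "cnj \<beta> = - \<alpha>" for k l \<alpha> \<beta>
    unfolding k_alg_def u_alg_def using Emat_carrier Emat_adj[OF that] by (auto simp: Emat_def)
  have "A $$ (Suc k, Suc l) = 0" if k: "k < n" and l: "l < n" for k l
  proof -
    have t1: "comm X PP $$ (Suc l, Suc k) * 1 + comm X PP $$ (Suc k, Suc l) * (-1) = 0"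
      using tr0[OF Ek[where k=k and l=l and \<alpha>=1 and \<beta>="-1"]] mtrace_Emat[OF Cc, where a="Suc k" and b="Suc l" and \<alpha>=1 and \<beta>="-1"] k l by simp
    have t2: "comm X PP $$ (Suc l, Suc k) * \<i> + comm X PP $$ (Suc k, Suc l) * \<i> = 0"
      using tr0[OF Ek[where k=k and l=l and \<alpha>="\<i>" and \<beta>="\<i>"]] mtrace_Emat[OF Cc, where a="Suc k" and b="Suc l" and \<alpha>="\<i>" and \<beta>="\<i>"] k l by simp
    from t1 have "comm X PP $$ (Suc l, Suc k) = comm X PP $$ (Suc k, Suc l)" by simp
    with t2 have "2 * \<i> * comm X PP $$ (Suc k, Suc l) = 0" by (simp add: algebra_simps)
    thus ?thesis using X(2) by simp
  qed
  thus ?thesis using that X by blast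
qed

lemma perp_intro:
  assumes X: "X \<in> u_alg (Suc n)" and B: "\<And>k l. k < n \<Longrightarrow> l < n \<Longrightarrow> comm X PP $$ (Suc k, Suc l) = 0"
  shows "comm X PP \<in> tangent_K_perp n PP"
proof -
  have Xc: "X \<in> carrier_mat (Suc n) (Suc n)" using X unfolding u_alg_def by simp
  have Cc: "comm X PP \<in> carrier_mat (Suc n) (Suc n)" using comm_carrier[OF Xc] .
  have "omega PP X Y = 0" if Y: "Y \<in> k_alg n" for Y
  proof -
    have Yc: "Y \<in> carrier_mat (Suc n) (Suc n)" using Y unfolding k_alg_def u_alg_def by simp
    have Y0: "Y$$(0,j) = 0" "Y$$(j,0) = 0" if "j < Suc n" for j using Y that unfolding k_alg_def by auto
    have "mtrace (comm X PP * Y) = (\<Sum>i<Suc n. \<Sum>j<Suc n. (comm X PP)$$(i,j) * Y$$(j,i))"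
      by (rule mtrace_mult[OF Cc Yc])
    also have "\<dots> = 0"
    proof (intro sum.neutral ballI)
      fix i j assume i: "i \<in> {..<Suc n}" and j: "j \<in> {..<Suc n}"
      show "(comm X PP)$$(i,j) * Y$$(j,i) = 0"
      proof (cases "i = 0 \<or> j = 0")
        case True thus ?thesis using Y0 i j by auto
      next
        case False
        then obtain k l where kl: "i = Suc k" "j = Suc l" by (metis not0_implies_Suc)
        thus ?thesis using B[of k l] i j by simp
      qed
    qed
    finally show ?thesis unfolding omega_eq[OF PP_carrier Xc Yc] by simp
  qed
  thus ?thesis unfolding tangent_K_perp_def using X by auto
qed

lemma skew_entries:
  assumes X: "X \<in> u_alg (Suc n)" and a: "a < Suc n" and b: "b < Suc n"
  shows "cnj (X $$ (b,a)) = - X $$ (a,b)"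
proof -
  have Xc: "X \<in> carrier_mat (Suc n) (Suc n)" and ad: "adj X = - X" using X unfolding u_alg_def by auto
  have "adj X $$ (a,b) = cnj (X $$ (b,a))" unfolding adj_def using Xc a b by simp
  moreover have "(- X) $$ (a,b) = - X $$ (a,b)" using Xc a b by simp
  ultimately show ?thesis using ad by simp
qed

lemma re_zero_of_cnj: "cnj z = - z \<Longrightarrow> Re z = 0"
proof -
  assume "cnj z = - z"
  hence "Re (cnj z) = Re (- z)" by simp
  thus "Re z = 0" by simp
qed

end


context interl begin

lemma nonM_val:
  assumes X: "X \<in> carrier_mat (Suc n) (Suc n)"
    and B: "\<And>k l. k < n \<Longrightarrow> l < n \<Longrightarrow> comm X PP $$ (Suc k, Suc l) = 0"
    and j: "j < n" and zj: "z_vec n lam mu j = 0"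
    and zl: "\<And>l. l < n \<Longrightarrow> z_vec n lam mu l \<noteq> 0 \<Longrightarrow> mu l \<noteq> mu j"
  shows "comm X PP $$ (Suc j, 0) = complex_of_real (c_const n lam mu - mu j + (\<Sum>l<n. (z_vec n lam mu l)^2 / (mu j - mu l))) * X$$(Suc j,0)"
proof -
  have tmx: "X$$(Suc j,Suc l) * zc l = complex_of_real ((z_vec n lam mu l)^2 / (mu j - mu l)) * X$$(Suc j,0)"
    if l: "l < n" for l
  proof (cases "z_vec n lam mu l = 0")
    case True thus ?thesis by simp
  next
    case False
    have ne: "mu l \<noteq> mu j" using zl[OF l False] .
    have "comm X PP $$ (Suc j, Suc l) = 0" using B[OF j l] .
    hence eq: "X$$(Suc j,0) * zc l + X$$(Suc j,Suc l) * (of_real (mu l) - of_real (mu j)) = 0"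
      using commB[OF X j l] zj by simp
    have ne': "complex_of_real (mu j) - complex_of_real (mu l) \<noteq> 0" using ne by simp
    have "X$$(Suc j,Suc l) = X$$(Suc j,0) * zc l / (of_real (mu j) - of_real (mu l))"
      using eq ne' by (simp add: field_simps)
    thus ?thesis using ne' by (simp add: field_simps power2_eq_square)
  qed
  have "comm X PP $$ (Suc j, 0) = (ccc - of_real (mu j)) * X$$(Suc j,0) + (\<Sum>l<n. X$$(Suc j,Suc l) * zc l)"
    using commL[OF X j] zj by simp
  also have "(\<Sum>l<n. X$$(Suc j,Suc l) * zc l) = (\<Sum>l<n. complex_of_real ((z_vec n lam mu l)^2 / (mu j - mu l)) * X$$(Suc j,0))"
    by (rule sum.cong[OF refl]) (simp add: tmx)
  also have "\<dots> = complex_of_real (\<Sum>l<n. (z_vec n lam mu l)^2 / (mu j - mu l)) * X$$(Suc j,0)"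
    by (simp add: sum_distrib_right)
  finally show ?thesis by (simp add: algebra_simps)
qed

lemma M_re:
  assumes X: "X \<in> u_alg (Suc n)"
    and B: "\<And>k l. k < n \<Longrightarrow> l < n \<Longrightarrow> comm X PP $$ (Suc k, Suc l) = 0"
    and s: "s < n" and zs: "z_vec n lam mu s \<noteq> 0"
    and zl: "\<And>l. l < n \<Longrightarrow> l \<noteq> s \<Longrightarrow> z_vec n lam mu l \<noteq> 0 \<Longrightarrow> mu l \<noteq> mu s"
  shows "Re (comm X PP $$ (Suc s, 0)) = 0"
proof -
  have Xc: "X \<in> carrier_mat (Suc n) (Suc n)" using X unfolding u_alg_def by simp
  have sk: "cnj (X $$ (b,a)) = - X $$ (a,b)" if "a < Suc n" "b < Suc n" for a b
    using skew_entries[OF X that] .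
  have rediag: "Re (X $$ (a,a)) = 0" if "a < Suc n" for a
    using re_zero_of_cnj sk[OF that that] by blast
  have re0: "Re (X $$ (Suc l, 0)) = 0" if l: "l < n" and zl0: "z_vec n lam mu l \<noteq> 0" for l
  proof -
    have "comm X PP $$ (Suc l, Suc l) = 0" using B[OF l l] .
    hence "X$$(Suc l,0) * zc l - zc l * X$$(0,Suc l) = 0" using commB[OF Xc l l] by simp
    moreover have "X$$(0,Suc l) = - cnj (X$$(Suc l,0))" using sk[of 0 "Suc l"] l by simp
    ultimately have "zc l * (X$$(Suc l,0) + cnj (X$$(Suc l,0))) = 0" by (simp add: algebra_simps)
    hence "X$$(Suc l,0) + cnj (X$$(Suc l,0)) = 0" using zl0 by simp
    hence "Re (X$$(Suc l,0) + cnj (X$$(Suc l,0))) = 0" by simp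
    thus ?thesis by simp
  qed
  have re0': "Re (X $$ (0, Suc l)) = 0" if l: "l < n" and zl0: "z_vec n lam mu l \<noteq> 0" for l
  proof -
    have "X$$(0,Suc l) = - cnj (X$$(Suc l,0))" using sk[of 0 "Suc l"] l by simp
    thus ?thesis using re0[OF l zl0] by simp
  qed
  have tm: "Re (X$$(Suc s,Suc l) * zc l) = 0" if l: "l < n" for l
  proof (cases "z_vec n lam mu l = 0")
    case True thus ?thesis by simp
  next
    case False
    show ?thesis
    proof (cases "l = s")
      case True thus ?thesis using rediag[of "Suc s"] s by simp
    next
      case ls: False
      have ne: "mu l \<noteq> mu s" using zl[OF l ls False] .
      have "comm X PP $$ (Suc s, Suc l) = 0" using B[OF s l] .
      hence "X$$(Suc s,0) * zc l + X$$(Suc s,Suc l) * (of_real (mu l) - of_real (mu s)) - zc s * X$$(0,Suc l) = 0"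
        using commB[OF Xc s l] by simp
      hence "Re (X$$(Suc s,0) * zc l + X$$(Suc s,Suc l) * (of_real (mu l) - of_real (mu s)) - zc s * X$$(0,Suc l)) = 0"
        by simp
      hence "Re (X$$(Suc s,0)) * z_vec n lam mu l + Re (X$$(Suc s,Suc l)) * (mu l - mu s) - z_vec n lam mu s * Re (X$$(0,Suc l)) = 0"
        by simp
      hence "Re (X$$(Suc s,Suc l)) * (mu l - mu s) = 0" using re0[OF s zs] re0'[OF l False] by simp
      hence "Re (X$$(Suc s,Suc l)) = 0" using ne by simp
      thus ?thesis by simp
    qed
  qed
  have "comm X PP $$ (Suc s, 0) = (ccc - of_real (mu s)) * X$$(Suc s,0) + (\<Sum>l<n. X$$(Suc s,Suc l) * zc l) - zc s * X$$(0,0)"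
    using commL[OF Xc s] .
  hence "Re (comm X PP $$ (Suc s, 0)) = (c_const n lam mu - mu s) * Re (X$$(Suc s,0)) + (\<Sum>l<n. Re (X$$(Suc s,Suc l) * zc l)) - z_vec n lam mu s * Re (X$$(0,0))"
    by (simp add: Re_sum)
  also have "(\<Sum>l<n. Re (X$$(Suc s,Suc l) * zc l)) = 0" by (intro sum.neutral ballI tm) simp
  finally show ?thesis using re0[OF s zs] rediag[of 0] by simp
qed

end


lemma re0_cnj: "Re z = 0 \<Longrightarrow> cnj z = - z"
  by (simp add: complex_eq_iff)

context interl begin

lemma P_construct:
  fixes F v :: real and s d :: nat and u :: "complex vec"
  assumes F: "F = c_const n lam mu - v + (\<Sum>l<n. (z_vec n lam mu l)^2 / (v - mu l))" and Fnz: "F \<noteq> 0"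
    and sd: "s + d \<le> n"
    and blk: "\<And>j. j < n \<Longrightarrow> (mu j = v \<longleftrightarrow> s \<le> j \<and> j < s + d)"
    and zb: "\<And>j. j < n \<Longrightarrow> mu j = v \<Longrightarrow> z_vec n lam mu j = 0"
    and u: "u \<in> carrier_vec d"
  shows "\<exists>X. X \<in> u_alg (Suc n) \<and> (\<forall>k<n. \<forall>l<n. comm X PP $$ (Suc k, Suc l) = 0) \<and> u = vec d (\<lambda>k. comm X PP $$ (Suc (s+k), 0))"
proof -
  define inb where "inb j \<longleftrightarrow> s \<le> j \<and> j < s + d" for j
  define wc where "wc j = (if inb j then u $ (j - s) / complex_of_real F else 0)" for j
  define Zc where "Zc k l = (if inb k \<and> \<not> inb l then wc k * zc l / complex_of_real (v - mu l)
      else if \<not> inb k \<and> inb l then - (zc k * cnj (wc l)) / complex_of_real (v - mu k) else 0)" for k l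
  define X where "X = mat (Suc n) (Suc n) (\<lambda>(a,b). if a = 0 then (if b = 0 then 0 else - cnj (wc (b - 1)))
      else if b = 0 then wc (a - 1) else Zc (a - 1) (b - 1))"
  have Xc: "X \<in> carrier_mat (Suc n) (Suc n)" unfolding X_def by simp
  have X00: "X $$ (0,0) = 0" unfolding X_def by simp
  have X0l: "X $$ (0, Suc l) = - cnj (wc l)" if "l < n" for l using that unfolding X_def by simp
  have Xk0: "X $$ (Suc k, 0) = wc k" if "k < n" for k using that unfolding X_def by simp
  have Xkl: "X $$ (Suc k, Suc l) = Zc k l" if "k < n" "l < n" for k l using that unfolding X_def by simp
  have inbv: "inb j \<longleftrightarrow> mu j = v" if "j < n" for j using blk[OF that] unfolding inb_def by simp
  have zin: "zc j = 0" if "j < n" "inb j" for j using zb[of j] that inbv by simp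
  have wout: "wc j = 0" if "\<not> inb j" for j using that unfolding wc_def by simp
  have Zsk: "cnj (Zc l k) = - Zc k l" for k l
    by (cases "inb k"; cases "inb l") (simp_all add: Zc_def algebra_simps)
  have skew: "adj X = - X"
  proof (rule eq_matI)
    fix a b assume "a < dim_row (- X)" "b < dim_col (- X)"
    hence ab: "a < Suc n" "b < Suc n" using Xc by auto
    have l: "adj X $$ (a,b) = cnj (X $$ (b,a))" using ab Xc by (simp add: adj_def)
    have r: "(- X) $$ (a,b) = - X $$ (a,b)" using ab Xc by simp
    have "cnj (X $$ (b,a)) = - X $$ (a,b)"
    proof (cases a)
      case 0
      show ?thesis
      proof (cases b)
        case 0 thus ?thesis using \<open>a = 0\<close> X00 by simp
      next
        case (Suc l) thus ?thesis using \<open>a = 0\<close> X0l Xk0 ab by simp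
      qed
    next
      case (Suc k)
      show ?thesis
      proof (cases b)
        case 0 thus ?thesis using \<open>a = Suc k\<close> X0l Xk0 ab by simp
      next
        case (Suc l) thus ?thesis using \<open>a = Suc k\<close> Xkl ab Zsk by simp
      qed
    qed
    thus "adj X $$ (a,b) = (- X) $$ (a,b)" using l r by simp
  qed (use Xc in \<open>auto simp: adj_def\<close>)
  have Xu: "X \<in> u_alg (Suc n)" unfolding u_alg_def using Xc skew by simp
  have B: "comm X PP $$ (Suc k, Suc l) = 0" if k: "k < n" and l: "l < n" for k l
  proof -
    have e: "comm X PP $$ (Suc k, Suc l) = wc k * zc l + Zc k l * (of_real (mu l) - of_real (mu k)) + zc k * cnj (wc l)"
      using commB[OF Xc k l] Xk0[OF k] Xkl[OF k l] X0l[OF l] by simp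
    show ?thesis
    proof (cases "inb k")
      case ik: True
      hence mk: "mu k = v" using inbv[OF k] by simp
      show ?thesis
      proof (cases "inb l")
        case True
        thus ?thesis using e ik zin[OF k ik] zin[OF l] unfolding Zc_def by simp
      next
        case False
        hence ml: "mu l \<noteq> v" using inbv[OF l] by simp
        hence nz: "complex_of_real v - complex_of_real (mu l) \<noteq> 0" by simp
        have "Zc k l = wc k * zc l / (of_real v - of_real (mu l))" unfolding Zc_def using ik False by simp
        thus ?thesis using e wout[OF False] mk nz by (simp add: field_simps)
      qed
    next
      case nk: False
      hence mk: "mu k \<noteq> v" using inbv[OF k] by simp
      hence nz: "complex_of_real v - complex_of_real (mu k) \<noteq> 0" by simp
      show ?thesis
      proof (cases "inb l")
        case True
        hence ml: "mu l = v" using inbv[OF l] by simp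
        have "Zc k l = - (zc k * cnj (wc l)) / (of_real v - of_real (mu k))" unfolding Zc_def using nk True by simp
        thus ?thesis using e wout[OF nk] ml nz by (simp add: field_simps)
      next
        case False
        thus ?thesis using e wout[OF nk] wout[OF False] unfolding Zc_def by simp
      qed
    qed
  qed
  have T: "comm X PP $$ (Suc (s+k), 0) = u $ k" if k: "k < d" for k
  proof -
    define j where "j = s + k"
    have j: "j < n" using k sd unfolding j_def by simp
    have ij: "inb j" unfolding inb_def j_def using k by simp
    have mj: "mu j = v" using inbv[OF j] ij by simp
    have zj: "z_vec n lam mu j = 0" using zb[OF j mj] .
    have zl: "mu l \<noteq> mu j" if "l < n" "z_vec n lam mu l \<noteq> 0" for l
      using zb[of l] that mj by auto
    have "comm X PP $$ (Suc j, 0) = complex_of_real (c_const n lam mu - mu j + (\<Sum>l<n. (z_vec n lam mu l)^2 / (mu j - mu l))) * X$$(Suc j,0)"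
      by (rule nonM_val[OF Xc _ j zj zl]) (use B in auto)
    also have "\<dots> = complex_of_real F * wc j" using F mj Xk0[OF j] by simp
    also have "\<dots> = u $ k" using Fnz ij unfolding wc_def j_def by simp
    finally show ?thesis unfolding j_def .
  qed
  have "u = vec d (\<lambda>k. comm X PP $$ (Suc (s+k), 0))"
    by (rule eq_vecI) (use u T in auto)
  thus ?thesis using Xu B by blast
qed

lemma M_construct:
  fixes v r :: real and s d :: nat and u :: "complex vec"
  assumes sd: "s + d \<le> n" and d1: "d \<ge> 1"
    and blk: "\<And>j. j < n \<Longrightarrow> (mu j = v \<longleftrightarrow> s \<le> j \<and> j < s + d)"
    and zs: "z_vec n lam mu s = r" and rnz: "r \<noteq> 0"
    and zb: "\<And>j. j < n \<Longrightarrow> mu j = v \<Longrightarrow> j \<noteq> s \<Longrightarrow> z_vec n lam mu j = 0"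
    and u: "u \<in> carrier_vec d" and re: "Re (u $ 0) = 0"
  shows "\<exists>Y. Y \<in> k_alg n \<and> (\<forall>k<n. \<forall>l<n. comm Y PP $$ (Suc k, Suc l) = 0) \<and> u = vec d (\<lambda>k. comm Y PP $$ (Suc (s+k), 0))"
proof -
  define inb where "inb j \<longleftrightarrow> s \<le> j \<and> j < s + d" for j
  define Yc where "Yc k l = (if l = s \<and> inb k then u $ (k - s) / complex_of_real r
      else if k = s \<and> inb l \<and> l \<noteq> s then - cnj (u $ (l - s)) / complex_of_real r else 0)" for k l
  define Y where "Y = mat (Suc n) (Suc n) (\<lambda>(a,b). if a = 0 \<or> b = 0 then 0 else Yc (a - 1) (b - 1))"
  have s: "s < n" using sd d1 by simp
  have iss: "inb s" unfolding inb_def using d1 by simp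
  have Yc_: "Y \<in> carrier_mat (Suc n) (Suc n)" unfolding Y_def by simp
  have Y0: "Y $$ (0, j) = 0" "Y $$ (j, 0) = 0" if "j < Suc n" for j using that unfolding Y_def by simp_all
  have Ykl: "Y $$ (Suc k, Suc l) = Yc k l" if "k < n" "l < n" for k l using that unfolding Y_def by simp
  have inbv: "inb j \<longleftrightarrow> mu j = v" if "j < n" for j using blk[OF that] unfolding inb_def by simp
  have c0: "cnj (u $ 0) = - u $ 0" using re0_cnj[OF re] .
  have Ysk: "cnj (Yc l k) = - Yc k l" for k l
  proof (cases "k = s")
    case ks: True
    show ?thesis
    proof (cases "l = s")
      case True
      thus ?thesis using ks iss c0 unfolding Yc_def by simp
    next
      case False
      thus ?thesis using ks unfolding Yc_def by simp
    qed
  next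
    case ks: False
    show ?thesis
    proof (cases "l = s")
      case True
      thus ?thesis using ks unfolding Yc_def by simp
    next
      case False
      thus ?thesis using ks unfolding Yc_def by simp
    qed
  qed
  have skew: "adj Y = - Y"
  proof (rule eq_matI)
    fix a b assume "a < dim_row (- Y)" "b < dim_col (- Y)"
    hence ab: "a < Suc n" "b < Suc n" using Yc_ by auto
    have l: "adj Y $$ (a,b) = cnj (Y $$ (b,a))" using ab Yc_ by (simp add: adj_def)
    have r: "(- Y) $$ (a,b) = - Y $$ (a,b)" using ab Yc_ by simp
    have "cnj (Y $$ (b,a)) = - Y $$ (a,b)"
    proof (cases "a = 0 \<or> b = 0")
      case True thus ?thesis using Y0 ab by auto
    next
      case False
      then obtain k l where kl: "a = Suc k" "b = Suc l" by (metis not0_implies_Suc)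
      thus ?thesis using Ykl ab Ysk by simp
    qed
    thus "adj Y $$ (a,b) = (- Y) $$ (a,b)" using l r by simp
  qed (use Yc_ in \<open>auto simp: adj_def\<close>)
  have Yk: "Y \<in> k_alg n" unfolding k_alg_def u_alg_def using Yc_ skew Y0 by auto
  have nzb: "inb k \<and> inb l" if "Yc k l \<noteq> 0" for k l
    using that iss unfolding Yc_def by (auto split: if_splits)
  have B: "comm Y PP $$ (Suc k, Suc l) = 0" if k: "k < n" and l: "l < n" for k l
  proof -
    have e: "comm Y PP $$ (Suc k, Suc l) = Yc k l * (of_real (mu l) - of_real (mu k))"
      using commB[OF Yc_ k l] Y0[of "Suc k"] Y0[of "Suc l"] Ykl[OF k l] k l by simp
    show ?thesis
    proof (cases "Yc k l = 0")
      case True thus ?thesis using e by simp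
    next
      case False
      hence "mu k = v" "mu l = v" using nzb[OF False] inbv k l by auto
      thus ?thesis using e by simp
    qed
  qed
  have T: "comm Y PP $$ (Suc (s+k), 0) = u $ k" if k: "k < d" for k
  proof -
    define j where "j = s + k"
    have j: "j < n" using k sd unfolding j_def by simp
    have ij: "inb j" unfolding inb_def j_def using k by simp
    have "comm Y PP $$ (Suc j, 0) = (\<Sum>l<n. Y$$(Suc j,Suc l) * zc l)"
      using commL[OF Yc_ j] Y0[of 0] Y0[of "Suc j"] j by simp
    also have "\<dots> = (\<Sum>l<n. if l = s then Yc j s * zc s else 0)"
    proof (rule sum.cong[OF refl])
      fix l assume "l \<in> {..<n}"
      hence l: "l < n" by simp
      show "Y$$(Suc j,Suc l) * zc l = (if l = s then Yc j s * zc s else 0)"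
      proof (cases "l = s")
        case True thus ?thesis using Ykl[OF j l] by simp
      next
        case ls: False
        show ?thesis
        proof (cases "inb l")
          case True
          hence "mu l = v" using inbv[OF l] by simp
          hence "zc l = 0" using zb[OF l _ ls] by simp
          thus ?thesis using ls by simp
        next
          case False
          hence "Yc j l = 0" using nzb[of j l] by auto
          thus ?thesis using Ykl[OF j l] ls by simp
        qed
      qed
    qed
    also have "\<dots> = Yc j s * zc s" using s by simp
    also have "\<dots> = u $ k" using ij rnz zs unfolding Yc_def j_def by simp
    finally show ?thesis unfolding j_def .
  qed
  have "u = vec d (\<lambda>k. comm Y PP $$ (Suc (s+k), 0))"
    by (rule eq_vecI) (use u T in auto)
  thus ?thesis using Yk B by blast
qed

end


lemma quot_id:
  assumes V: "V = carrier_vec d" and U: "U = {0\<^sub>v d}" and G: "G \<subseteq> carrier_mat d d"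
  shows "quot_rep_iso V U G (carrier_vec d)"
proof -
  have cs: "coset U x = {x}" if "x \<in> carrier_vec d" for x using that unfolding U coset_def by simp
  have q: "quot V U = (\<lambda>x. {x}) ` carrier_vec d" unfolding quot_def V using cs by auto
  have bij: "bij_betw the_elem (quot V U) (carrier_vec d)"
    unfolding q by (rule bij_betw_imageI) (auto simp: inj_on_def image_image)
  have lin: "the_elem (coset U (complex_of_real a \<cdot>\<^sub>v x + y)) = complex_of_real a \<cdot>\<^sub>v the_elem (coset U x) + the_elem (coset U y)"
    if "x \<in> V" "y \<in> V" for a x y
  proof -
    have "complex_of_real a \<cdot>\<^sub>v x + y \<in> carrier_vec d" using that V by auto
    thus ?thesis using cs that V by simp
  qed
  have eqv: "the_elem (coset U (g *\<^sub>v x)) = g *\<^sub>v the_elem (coset U x)" if "g \<in> G" "x \<in> V" for g x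
  proof -
    have "g *\<^sub>v x \<in> carrier_vec d" using that G V by auto
    thus ?thesis using cs that V by simp
  qed
  show ?thesis unfolding quot_rep_iso_def using bij lin eqv by blast
qed

lemma quot_triv:
  assumes VU: "V = U" and Uc: "U \<subseteq> carrier_vec d" and U0: "0\<^sub>v d \<in> U"
    and add: "\<And>x y. x \<in> U \<Longrightarrow> y \<in> U \<Longrightarrow> x + y \<in> U" and sub: "\<And>x y. x \<in> U \<Longrightarrow> y \<in> U \<Longrightarrow> y - x \<in> U"
    and G: "G \<subseteq> carrier_mat d d"
  shows "quot_rep_iso V U G {0\<^sub>v d}"
proof -
  have cs: "coset U x = U" if x: "x \<in> U" for x
  proof (intro equalityI subsetI)
    fix w assume "w \<in> coset U x"
    then obtain u where "u \<in> U" "w = x + u" unfolding coset_def by auto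
    thus "w \<in> U" using add x by simp
  next
    fix w assume w: "w \<in> U"
    have dx: "dim_vec x = d" and dw: "dim_vec w = d" using x w Uc by auto
    have "x + (w - x) = w" using dx dw by (intro eq_vecI) auto
    moreover have "w - x \<in> U" using sub x w by simp
    ultimately show "w \<in> coset U x" unfolding coset_def by (metis image_eqI)
  qed
  have q: "quot V U = {U}" unfolding quot_def VU using cs U0 by auto
  have bij: "bij_betw (\<lambda>_. 0\<^sub>v d) (quot V U) {0\<^sub>v d}" unfolding q by (simp add: bij_betw_def)
  have z1: "complex_of_real a \<cdot>\<^sub>v 0\<^sub>v d + 0\<^sub>v d = 0\<^sub>v d" for a by (intro eq_vecI) auto
  have z2: "g *\<^sub>v 0\<^sub>v d = 0\<^sub>v d" if "g \<in> G" for g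
  proof -
    have "g \<in> carrier_mat d d" using that G by auto
    thus ?thesis by (intro eq_vecI) (auto simp: scalar_prod_def)
  qed
  show ?thesis unfolding quot_rep_iso_def
    by (rule exI[of _ "\<lambda>_. 0\<^sub>v d"]) (use bij z1 z2 in auto)
qed

context interl begin

lemma block_result:
  assumes im: "i < mcount mu n"
  shows "quot_rep_iso (V_block n lam mu i) (U_block n lam mu i) (L_group n lam mu i)
             (if is_P n lam mu (dvals mu n ! i) then carrier_vec (block_size n mu i) else {0\<^sub>v (block_size n mu i)})"
proof -
  define v where "v = dvals mu n ! i"
  define s where "s = block_start n mu i"
  define d where "d = block_size n mu i"
  have vv: "v \<in> vals mu n" using dv_in[OF im] v_def by simp
  have s_eq: "s = cntM (\<lambda>y. v < y)" using block_start_eq[OF im] s_def v_def by simp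
  have d_eq: "d = mult mu n v" unfolding d_def block_size_def v_def ..
  have sd_eq: "s + d = cntM (\<lambda>y. v \<le> y)" using multM_split[of v] s_eq d_eq by simp
  have d1: "d \<ge> 1" using mult_pos[OF vv] d_eq by simp
  have sd: "s + d \<le> n" using sd_eq ge_le_n by simp
  have s: "s < n" using sd d1 by simp
  have blk: "mu j = v \<longleftrightarrow> s \<le> j \<and> j < s + d" if "j < n" for j using fiber[of j v] s_eq sd_eq that by auto
  have ms: "mu s = v" using blk[OF s] d1 by simp
  have zs: "z_vec n lam mu s = r_coef n lam mu v" using z_char[OF s] ms s_eq by simp
  have zb: "z_vec n lam mu j = 0" if "j < n" "mu j = v" "j \<noteq> s" for j
    using z_char[OF that(1)] that s_eq by simp
  have Lc: "L_group n lam mu i \<subseteq> carrier_mat d d"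
    unfolding L_group_def Let_def unitary_grp_def d_def by auto
  have bp: "block_proj n mu i (Tmap n A) = vec d (\<lambda>k. A $$ (Suc (s+k), 0))" for A
    unfolding block_proj_def Tmap_def s_def[symmetric] d_def[symmetric]
    by (rule eq_vecI) (use sd in auto)
  have Vsub: "V_block n lam mu i \<subseteq> carrier_vec d"
    unfolding V_block_def block_proj_def d_def by auto
  have V_elim: "\<exists>X. X \<in> u_alg (Suc n) \<and> (\<forall>k<n. \<forall>l<n. comm X PP $$ (Suc k, Suc l) = 0) \<and> u = vec d (\<lambda>k. comm X PP $$ (Suc (s+k), 0))"
    if "u \<in> V_block n lam mu i" for u
  proof -
    from that obtain A where A: "A \<in> tangent_K_perp n PP" "u = block_proj n mu i (Tmap n A)"
      unfolding V_block_def V_space_def by auto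
    from perp_B[OF A(1)] obtain X where X: "X \<in> u_alg (Suc n)" "A = comm X PP"
      "\<And>k l. k < n \<Longrightarrow> l < n \<Longrightarrow> A $$ (Suc k, Suc l) = 0" by blast
    show ?thesis using X A(2) bp by auto
  qed
  have V_intro: "vec d (\<lambda>k. comm X PP $$ (Suc (s+k), 0)) \<in> V_block n lam mu i"
    if "X \<in> u_alg (Suc n)" "\<forall>k<n. \<forall>l<n. comm X PP $$ (Suc k, Suc l) = 0" for X
  proof -
    have "comm X PP \<in> tangent_K_perp n PP" using perp_intro that by blast
    thus ?thesis unfolding V_block_def V_space_def using bp by (metis image_eqI)
  qed
  have U_elim: "\<exists>Y. Y \<in> k_alg n \<and> (\<forall>k<n. \<forall>l<n. comm Y PP $$ (Suc k, Suc l) = 0) \<and> u = vec d (\<lambda>k. comm Y PP $$ (Suc (s+k), 0))"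
    if "u \<in> U_block n lam mu i" for u
  proof -
    from that obtain A where A: "A \<in> tangent_K n PP" "A \<in> tangent_K_perp n PP" "u = block_proj n mu i (Tmap n A)"
      unfolding U_block_def U_space_def by auto
    from A(1) obtain Y where Y: "Y \<in> k_alg n" "A = comm Y PP" unfolding tangent_K_def by auto
    from perp_B[OF A(2)] have "\<And>k l. k < n \<Longrightarrow> l < n \<Longrightarrow> A $$ (Suc k, Suc l) = 0" by metis
    thus ?thesis using Y A(3) bp by auto
  qed
  have U_intro: "vec d (\<lambda>k. comm Y PP $$ (Suc (s+k), 0)) \<in> U_block n lam mu i"
    if Y: "Y \<in> k_alg n" "\<forall>k<n. \<forall>l<n. comm Y PP $$ (Suc k, Suc l) = 0" for Y
  proof -
    have Yu: "Y \<in> u_alg (Suc n)" using Y unfolding k_alg_def by simp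
    have "comm Y PP \<in> tangent_K_perp n PP" using perp_intro Yu Y(2) by blast
    moreover have "comm Y PP \<in> tangent_K n PP" unfolding tangent_K_def using Y(1) by auto
    ultimately show ?thesis unfolding U_block_def U_space_def using bp by (metis IntI image_eqI)
  qed
  have UV: "U_block n lam mu i \<subseteq> V_block n lam mu i"
    unfolding U_block_def V_block_def U_space_def V_space_def by auto
  have Z0: "0\<^sub>m (Suc n) (Suc n) \<in> k_alg n"
    unfolding k_alg_def u_alg_def adj_def by (auto intro!: eq_matI)
  have Zc: "(0\<^sub>m (Suc n) (Suc n) :: complex mat) \<in> carrier_mat (Suc n) (Suc n)" by simp
  have zero_U: "0\<^sub>v d \<in> U_block n lam mu i"
  proof -
    have "vec d (\<lambda>k. comm (0\<^sub>m (Suc n) (Suc n)) PP $$ (Suc (s+k), 0)) \<in> U_block n lam mu i"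
      by (rule U_intro[OF Z0]) (simp add: commB[OF Zc])
    moreover have "vec d (\<lambda>k. comm (0\<^sub>m (Suc n) (Suc n)) PP $$ (Suc (s+k), 0)) = 0\<^sub>v d"
      by (rule eq_vecI) (use sd in \<open>auto simp: commL[OF Zc]\<close>)
    ultimately show ?thesis by simp
  qed
  show ?thesis
  proof (cases "v \<in> Mset")
    case vM: True
    define r where "r = r_coef n lam mu v"
    have rnz: "r \<noteq> 0" using r_nz[OF vM] r_def by simp
    have nP: "\<not> is_P n lam mu v" using vM isP_iff unfolding Mset_def by simp
    define S where "S = {u \<in> carrier_vec d. Re (u $ 0) = 0}"
    have VS: "V_block n lam mu i \<subseteq> S"
    proof
      fix u assume u: "u \<in> V_block n lam mu i"
      from V_elim[OF u] obtain X where X: "X \<in> u_alg (Suc n)" "\<forall>k<n. \<forall>l<n. comm X PP $$ (Suc k, Suc l) = 0"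
        "u = vec d (\<lambda>k. comm X PP $$ (Suc (s+k), 0))" by blast
      have zs': "z_vec n lam mu s \<noteq> 0" using zs rnz r_def by simp
      have zl: "mu l \<noteq> mu s" if "l < n" "l \<noteq> s" "z_vec n lam mu l \<noteq> 0" for l
        using zb[of l] that ms by auto
      have "Re (comm X PP $$ (Suc s, 0)) = 0"
        by (rule M_re[OF X(1) _ s zs' zl]) (use X(2) in auto)
      moreover have "u $ 0 = comm X PP $$ (Suc s, 0)" using X(3) d1 by simp
      ultimately show "u \<in> S" unfolding S_def using u Vsub by auto
    qed
    have SU: "S \<subseteq> U_block n lam mu i"
    proof
      fix u assume "u \<in> S"
      hence u: "u \<in> carrier_vec d" "Re (u $ 0) = 0" unfolding S_def by auto
      have ex: "\<exists>Y. Y \<in> k_alg n \<and> (\<forall>k<n. \<forall>l<n. comm Y PP $$ (Suc k, Suc l) = 0) \<and> u = vec d (\<lambda>k. comm Y PP $$ (Suc (s+k), 0))"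
      proof (rule M_construct[where v=v and r=r])
        show "s + d \<le> n" by (rule sd)
        show "1 \<le> d" by (rule d1)
        show "\<And>j. j < n \<Longrightarrow> (mu j = v) = (s \<le> j \<and> j < s + d)" by (rule blk)
        show "z_vec n lam mu s = r" using zs unfolding r_def .
        show "r \<noteq> 0" by (rule rnz)
        show "\<And>j. j < n \<Longrightarrow> mu j = v \<Longrightarrow> j \<noteq> s \<Longrightarrow> z_vec n lam mu j = 0" by (rule zb)
        show "u \<in> carrier_vec d" by (rule u(1))
        show "Re (u $ 0) = 0" by (rule u(2))
      qed
      then obtain Y where
        Y: "Y \<in> k_alg n" "\<forall>k<n. \<forall>l<n. comm Y PP $$ (Suc k, Suc l) = 0" "u = vec d (\<lambda>k. comm Y PP $$ (Suc (s+k), 0))"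
        by blast
      show "u \<in> U_block n lam mu i" using U_intro[OF Y(1,2)] Y(3) by simp
    qed
    have VeS: "V_block n lam mu i = S" and UeS: "U_block n lam mu i = S" using VS SU UV by auto
    have "quot_rep_iso S S (L_group n lam mu i) {0\<^sub>v d}"
    proof (rule quot_triv)
      show "S \<subseteq> carrier_vec d" unfolding S_def by auto
      show "0\<^sub>v d \<in> S" unfolding S_def using d1 by simp
      show "x + y \<in> S" if "x \<in> S" "y \<in> S" for x y using that d1 unfolding S_def by auto
      show "y - x \<in> S" if "x \<in> S" "y \<in> S" for x y using that d1 unfolding S_def by auto
    qed (use Lc in auto)
    thus ?thesis using nP VeS UeS unfolding v_def d_def by simp
  next
    case vM: False
    have r0: "r_coef n lam mu v = 0" using r_zero[OF vM] .
    have zb': "z_vec n lam mu j = 0" if "j < n" "mu j = v" for j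
      using zb[OF that] zs r0 by (cases "j = s") auto
    define F where "F = c_const n lam mu - v + (\<Sum>l<n. (z_vec n lam mu l)^2 / (v - mu l))"
    have F_iff': "F = 0 \<longleftrightarrow> v \<in> Wset" unfolding F_def z_sum[OF vM] using F_iff[OF vM] .
    have Vform: "u = vec d (\<lambda>k. complex_of_real F * X $$ (Suc (s+k), 0))"
      if X: "X \<in> carrier_mat (Suc n) (Suc n)" "\<forall>k<n. \<forall>l<n. comm X PP $$ (Suc k, Suc l) = 0"
        and u: "u = vec d (\<lambda>k. comm X PP $$ (Suc (s+k), 0))" for X u
    proof -
      have "comm X PP $$ (Suc (s+k), 0) = complex_of_real F * X $$ (Suc (s+k), 0)" if k: "k < d" for k
      proof -
        have j: "s + k < n" using k sd by simp
        have mj: "mu (s+k) = v" using blk[OF j] k by simp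
        have zl: "mu l \<noteq> mu (s+k)" if "l < n" "z_vec n lam mu l \<noteq> 0" for l
          using zb'[of l] that mj by auto
        have "comm X PP $$ (Suc (s+k), 0) = complex_of_real (c_const n lam mu - mu (s+k) + (\<Sum>l<n. (z_vec n lam mu l)^2 / (mu (s+k) - mu l))) * X$$(Suc (s+k),0)"
          by (rule nonM_val[OF X(1) _ j zb'[OF j mj] zl]) (use X(2) in auto)
        thus ?thesis unfolding F_def using mj by simp
      qed
      thus ?thesis using u by (intro eq_vecI) auto
    qed
    have U0: "U_block n lam mu i = {0\<^sub>v d}"
    proof (intro equalityI subsetI)
      fix u assume "u \<in> U_block n lam mu i"
      from U_elim[OF this] obtain Y where Y: "Y \<in> k_alg n" "\<forall>k<n. \<forall>l<n. comm Y PP $$ (Suc k, Suc l) = 0"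
        "u = vec d (\<lambda>k. comm Y PP $$ (Suc (s+k), 0))" by blast
      have Yc: "Y \<in> carrier_mat (Suc n) (Suc n)" using Y(1) unfolding k_alg_def u_alg_def by simp
      have Y0: "Y $$ (Suc (s+k), 0) = 0" if "k < d" for k using Y(1) that sd unfolding k_alg_def by auto
      have "u = vec d (\<lambda>k. complex_of_real F * Y $$ (Suc (s+k), 0))" by (rule Vform[OF Yc Y(2,3)])
      also have "\<dots> = 0\<^sub>v d" by (rule eq_vecI) (use Y0 in auto)
      finally show "u \<in> {0\<^sub>v d}" by simp
    qed (use zero_U in auto)
    show ?thesis
    proof (cases "is_P n lam mu v")
      case True
      hence "dif v = 0" using isP_iff by simp
      hence "v \<notin> Wset" unfolding Wset_def by simp
      hence Fnz: "F \<noteq> 0" using F_iff' by simp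
      have "V_block n lam mu i = carrier_vec d"
      proof (intro equalityI subsetI)
        fix u assume "u \<in> V_block n lam mu i" thus "u \<in> carrier_vec d" using Vsub by auto
      next
        fix u :: "complex vec" assume u: "u \<in> carrier_vec d"
        have ex: "\<exists>X. X \<in> u_alg (Suc n) \<and> (\<forall>k<n. \<forall>l<n. comm X PP $$ (Suc k, Suc l) = 0) \<and> u = vec d (\<lambda>k. comm X PP $$ (Suc (s+k), 0))"
        proof (rule P_construct[where F=F and v=v])
          show "F = c_const n lam mu - v + (\<Sum>l<n. (z_vec n lam mu l)^2 / (v - mu l))" by (rule F_def)
          show "F \<noteq> 0" by (rule Fnz)
          show "s + d \<le> n" by (rule sd)
          show "\<And>j. j < n \<Longrightarrow> (mu j = v) = (s \<le> j \<and> j < s + d)" by (rule blk)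
          show "\<And>j. j < n \<Longrightarrow> mu j = v \<Longrightarrow> z_vec n lam mu j = 0" by (rule zb')
          show "u \<in> carrier_vec d" by (rule u)
        qed
        then obtain X where
          X: "X \<in> u_alg (Suc n)" "\<forall>k<n. \<forall>l<n. comm X PP $$ (Suc k, Suc l) = 0" "u = vec d (\<lambda>k. comm X PP $$ (Suc (s+k), 0))"
          by blast
        show "u \<in> V_block n lam mu i" using V_intro[OF X(1,2)] X(3) by simp
      qed
      hence "quot_rep_iso (V_block n lam mu i) (U_block n lam mu i) (L_group n lam mu i) (carrier_vec d)"
        by (intro quot_id[OF _ U0 Lc])
      thus ?thesis using True unfolding v_def d_def by simp
    next
      case nP: False
      have "dif v \<noteq> -1" using vM vv unfolding Mset_def Vall_def vals_def by auto
      hence "dif v = 1" using nP isP_iff dif_cases[of v] by auto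
      hence "v \<in> Wset" using vv unfolding Wset_def Vall_def vals_def by auto
      hence F0: "F = 0" using F_iff' by simp
      have "V_block n lam mu i = {0\<^sub>v d}"
      proof (intro equalityI subsetI)
        fix u assume u: "u \<in> V_block n lam mu i"
        from V_elim[OF u] obtain X where X: "X \<in> u_alg (Suc n)" "\<forall>k<n. \<forall>l<n. comm X PP $$ (Suc k, Suc l) = 0"
          "u = vec d (\<lambda>k. comm X PP $$ (Suc (s+k), 0))" by blast
        have Xc: "X \<in> carrier_mat (Suc n) (Suc n)" using X(1) unfolding u_alg_def by simp
        have "u = vec d (\<lambda>k. complex_of_real F * X $$ (Suc (s+k), 0))" by (rule Vform[OF Xc X(2,3)])
        also have "\<dots> = 0\<^sub>v d" using F0 by (intro eq_vecI) auto
        finally show "u \<in> {0\<^sub>v d}" by simp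
      qed (use zero_U UV in auto)
      hence "quot_rep_iso (V_block n lam mu i) (U_block n lam mu i) (L_group n lam mu i) {0\<^sub>v d}"
        using U0 by (intro quot_triv[OF _ _ _ _ _ Lc]) auto
      thus ?thesis using nP unfolding v_def d_def by simp
    qed
  qed
qed

end

theorem proposition4p6:
  fixes n :: nat and lam mu :: "nat \<Rightarrow> real"
  assumes "n \<ge> 1"
    and "\<And>j. j < n \<Longrightarrow> lam j \<ge> mu j"
    and "\<And>j. j < n \<Longrightarrow> mu j \<ge> lam (j+1)"
  shows "\<forall>i < mcount mu n.
           quot_rep_iso (V_block n lam mu i) (U_block n lam mu i) (L_group n lam mu i)
             (if is_P n lam mu (dvals mu n ! i) then carrier_vec (block_size n mu i)
              else {0\<^sub>v (block_size n mu i)})"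
proof -
  interpret interl n lam mu
    by unfold_locales (use assms in auto)
  show ?thesis using block_result by blast
qed


end
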